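(* Let $p_0>2$ be rational with continued fraction expansion $p_0=\nu_1+\cfrac{1}{\nu_2+\cfrac{1}{\ddots+\cfrac{1}{\nu_\alpha}}}$, $\alpha\ge1$, $\nu_j\in\mathbb{Z}_{\ge1}$. Define: $m_j=\nu_1+\dots+\nu_j$ for $0\le j\le\alpha$ (so $m_0=0$); $p_1=1$, $p_j=p_{j-2}-\nu_{j-1}p_{j-1}$ for $2\le j\le\alpha+1$ (with $p_0$ the given number); $y_{-1}=0,y_0=1,z_{-1}=1,z_0=0$, $y_j=y_{j-2}+\nu_jy_{j-1}$, $z_j=z_{j-2}+\nu_jz_{j-1}$ for $1\le j\le\alpha$; for $0\le r\le\alpha-1$ and $m_r<j\le m_{r+1}$: $\widetilde n_j=y_{r-1}+(j-m_r)y_r$; for $0\le r\le\alpha-1$ and $m_r\le j<m_{r+1}$: $w_j=z_{r-1}+(j-m_r)z_r-1$. Let $\theta=\pi/p_0$, $N$ an even positive integer, $u\in\mathbb{C}$, $m\in\{0,\dots,N/2\}$, and $\omega_1,\dots,\omega_m$ a solution of $$-\Biggl(\frac{\sinh\frac{\theta}{2}(\omega_j+i(u+2))\sinh\frac{\theta}{2}(\omega_j-iu)}{\sinh\frac{\theta}{2}(\omega_j-i(u+2))\sinh\frac{\theta}{2}(\omega_j+iu)}\Biggr)^{N/2}=\frac{Q(\omega_j+2i)}{Q(\omega_j-2i)},\quad Q(v)=\prod_{k=1}^m\sinh\tfrac{\theta}{2}(v-\omega_k).$$ For $n\ge0$ let $T_{n-1}(v)=\sum_{j=1}^{n}\phi(v-i(u+n+2-2j))\phi(v+i(u-n+2j))\frac{Q(v+in)Q(v-in)}{Q(v+i(2j-n))Q(v+i(2j-n-2))}$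 with $\phi(v)=(\sinh\frac{\theta}{2}v/\sin\theta)^{N/2}$. For $1\le j\le m_\alpha-1$, with $r\in\{0,\dots,\alpha-1\}$ the unique integer such that $m_r\le j<m_{r+1}$, set $$Y_j(v)=\frac{T_{\widetilde n_{j+1}+y_r-1}(v+iw_jp_0)\,T_{\widetilde n_{j+1}-y_r-1}(v+iw_jp_0)}{T_{y_r-1}(v+i\widetilde n_{j+1}+iw_jp_0)\,T_{y_r-1}(v-i\widetilde n_{j+1}+iw_jp_0)},$$ and with $j_{\max}=m_\alpha-1$ set $$K(v)=\frac{(-1)^{mz_\alpha}T_{\widetilde n_{j_{\max}}-1}(v+iw_{j_{\max}}p_0)}{T_{y_{\alpha-1}-1}(v+iy_\alpha+iw_{j_{\max}}p_0)};$$ also set $Y_0(v)=0$ and $Y_{-1}(v)=\infty$ (so that $(1+Y_{-1})^{-1}=0$). Then the following hold as identities of meromorphic functions of $v$: (i) for $1\le r\le\alpha$ and $m_{r-1}\le j\le m_r-2$: $Y_j(v+ip_r)Y_j(v-ip_r)=\bigl(1+Y_{j-1}(v)\bigr)^{1-2\delta_{j,m_{r-1}}}\bigl(1+Y_{j+1}(v)\bigr)$; (ii) for $1\le r\le\alpha-1$ and $j=m_r-1$: $Y_j(v+ip_r+ip_{r+1})Y_j(v+ip_r-ip_{r+1})Y_j(v-ip_r+ip_{r+1})Y_j(v-ip_r-ip_{r+1})=\bigl\{(1+Y_{j-1}(v+ip_{r+1}))(1+Y_{j-1}(v-ip_{r+1}))\bigr\}^{1-2\delta_{1,\nu_r}}(1+Y_{j+1}(v+ip_r))(1+Y_{j+1}(v-ip_r))(1+Y_j(v+ip_r-ip_{r+1}))(1+Y_j(v-ip_r+ip_{r+1}))$;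 (iii) $1+Y_{m_\alpha-1}(v)=\bigl(1+K(v)\bigr)^2$; (iv) $K(v+ip_\alpha)K(v-ip_\alpha)=1+Y_{m_\alpha-2}(v)$.
   Context: $T_{n-1}(v)$ are the eigenvalues (dressed vacuum form) of the fusion hierarchy of quantum transfer matrices for the spin-$\frac12$ XXZ chain with $\Delta=\cos(\pi/p_0)$; $\sinh$ denotes hyperbolic sine; $\delta$ is the Kronecker delta. The $\widetilde n_j$ are a rearrangement of the Takahashi–Suzuki numbers. *)

theory Defs
  imports "HOL-Analysis.Analysis"
begin

(* nu :: nat => nat encodes nu_1,...,nu_alpha (values outside 1..alpha irrelevant) *)

fun cfrec :: "(nat \<Rightarrow> nat) \<Rightarrow> nat \<Rightarrow> nat \<Rightarrow> real" where
  "cfrec \<nu> 0 j = real (\<nu> j)"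
| "cfrec \<nu> (Suc k) j = real (\<nu> j) + 1 / cfrec \<nu> k (Suc j)"

definition cfval :: "(nat \<Rightarrow> nat) \<Rightarrow> nat \<Rightarrow> real" where
  "cfval \<nu> \<alpha> = cfrec \<nu> (\<alpha> - 1) 1"

definition msum :: "(nat \<Rightarrow> nat) \<Rightarrow> nat \<Rightarrow> int" where
  "msum \<nu> j = int (\<Sum>k = 1..j. \<nu> k)"

fun pseq :: "(nat \<Rightarrow> nat) \<Rightarrow> real \<Rightarrow> nat \<Rightarrow> real" where
  "pseq \<nu> p0 0 = p0"
| "pseq \<nu> p0 (Suc 0) = 1"
| "pseq \<nu> p0 (Suc (Suc j)) = pseq \<nu> p0 j - real (\<nu> (Suc j)) * pseq \<nu> p0 (Suc j)"

(* shifted sequences: yy nu k = y_{k-1}, zz nu k = z_{k-1} *)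
fun yy :: "(nat \<Rightarrow> nat) \<Rightarrow> nat \<Rightarrow> int" where
  "yy \<nu> 0 = 0"
| "yy \<nu> (Suc 0) = 1"
| "yy \<nu> (Suc (Suc k)) = yy \<nu> k + int (\<nu> (Suc k)) * yy \<nu> (Suc k)"

fun zz :: "(nat \<Rightarrow> nat) \<Rightarrow> nat \<Rightarrow> int" where
  "zz \<nu> 0 = 1"
| "zz \<nu> (Suc 0) = 0"
| "zz \<nu> (Suc (Suc k)) = zz \<nu> k + int (\<nu> (Suc k)) * zz \<nu> (Suc k)"

definition ycf :: "(nat \<Rightarrow> nat) \<Rightarrow> int \<Rightarrow> int" where
  "ycf \<nu> j = yy \<nu> (nat (j + 1))"

definition zcf :: "(nat \<Rightarrow> nat) \<Rightarrow> int \<Rightarrow> int" where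
  "zcf \<nu> j = zz \<nu> (nat (j + 1))"

definition rnt :: "(nat \<Rightarrow> nat) \<Rightarrow> nat \<Rightarrow> int \<Rightarrow> nat" where
  "rnt \<nu> \<alpha> j = (THE r. r < \<alpha> \<and> msum \<nu> r < j \<and> j \<le> msum \<nu> (Suc r))"

definition rw :: "(nat \<Rightarrow> nat) \<Rightarrow> nat \<Rightarrow> int \<Rightarrow> nat" where
  "rw \<nu> \<alpha> j = (THE r. r < \<alpha> \<and> msum \<nu> r \<le> j \<and> j < msum \<nu> (Suc r))"

definition ntil :: "(nat \<Rightarrow> nat) \<Rightarrow> nat \<Rightarrow> int \<Rightarrow> int" where
  "ntil \<nu> \<alpha> j = (let r = rnt \<nu> \<alpha> j in
      ycf \<nu> (int r - 1) + (j - msum \<nu> r) * ycf \<nu> (int r))"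

definition wcf :: "(nat \<Rightarrow> nat) \<Rightarrow> nat \<Rightarrow> int \<Rightarrow> int" where
  "wcf \<nu> \<alpha> j = (let r = rw \<nu> \<alpha> j in
      zcf \<nu> (int r - 1) + (j - msum \<nu> r) * zcf \<nu> (int r) - 1)"

definition Qf :: "real \<Rightarrow> nat \<Rightarrow> (nat \<Rightarrow> complex) \<Rightarrow> complex \<Rightarrow> complex" where
  "Qf \<theta> m \<omega> v = (\<Prod>k = 1..m. sinh (complex_of_real (\<theta> / 2) * (v - \<omega> k)))"

definition phif :: "real \<Rightarrow> nat \<Rightarrow> complex \<Rightarrow> complex" where
  "phif \<theta> N v = (sinh (complex_of_real (\<theta> / 2) * v) / complex_of_real (sin \<theta>)) ^ (N div 2)"

(* Tf ... n v = T_{n-1}(v) *)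
definition Tf :: "real \<Rightarrow> nat \<Rightarrow> nat \<Rightarrow> complex \<Rightarrow> (nat \<Rightarrow> complex) \<Rightarrow> nat \<Rightarrow> complex \<Rightarrow> complex" where
  "Tf \<theta> N m u \<omega> n v =
     (\<Sum>j = 1..n.
        phif \<theta> N (v - \<i> * (u + of_nat n + 2 - 2 * of_nat j))
      * phif \<theta> N (v + \<i> * (u - of_nat n + 2 * of_nat j))
      * (Qf \<theta> m \<omega> (v + \<i> * of_nat n) * Qf \<theta> m \<omega> (v - \<i> * of_nat n))
      / (Qf \<theta> m \<omega> (v + \<i> * (2 * of_nat j - of_nat n))
         * Qf \<theta> m \<omega> (v + \<i> * (2 * of_nat j - of_nat n - 2))))"

definition Yf :: "(nat \<Rightarrow> nat) \<Rightarrow> nat \<Rightarrow> real \<Rightarrow> nat \<Rightarrow> nat \<Rightarrow> complex \<Rightarrow> (nat \<Rightarrow> complex)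
                  \<Rightarrow> int \<Rightarrow> complex \<Rightarrow> complex" where
  "Yf \<nu> \<alpha> p0 N m u \<omega> j v =
     (if j = 0 then 0 else
      (let \<theta> = pi / p0; r = rw \<nu> \<alpha> j; nt = ntil \<nu> \<alpha> (j + 1); yr = ycf \<nu> (int r);
           s = \<i> * of_int (wcf \<nu> \<alpha> j) * complex_of_real p0;
           T = Tf \<theta> N m u \<omega>
       in T (nat (nt + yr - 1 + 1)) (v + s) * T (nat (nt - yr - 1 + 1)) (v + s)
          / (T (nat (yr - 1 + 1)) (v + \<i> * of_int nt + s)
             * T (nat (yr - 1 + 1)) (v - \<i> * of_int nt + s))))"

definition Kf :: "(nat \<Rightarrow> nat) \<Rightarrow> nat \<Rightarrow> real \<Rightarrow> nat \<Rightarrow> nat \<Rightarrow> complex \<Rightarrow> (nat \<Rightarrow> complex)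
                  \<Rightarrow> complex \<Rightarrow> complex" where
  "Kf \<nu> \<alpha> p0 N m u \<omega> v =
     (let \<theta> = pi / p0; jmax = msum \<nu> \<alpha> - 1;
          s = \<i> * of_int (wcf \<nu> \<alpha> jmax) * complex_of_real p0;
          T = Tf \<theta> N m u \<omega>
      in (-1) ^ (m * nat (zcf \<nu> (int \<alpha>))) * T (nat (ntil \<nu> \<alpha> jmax - 1 + 1)) (v + s)
         / T (nat (ycf \<nu> (int \<alpha> - 1) - 1 + 1)) (v + \<i> * of_int (ycf \<nu> (int \<alpha>)) + s))"

(* (1 + Y_j(v))^e, with the convention Y_{-1} = infinity, i.e. (1 + Y_{-1})^{-1} = 0 *)
definition onepY :: "(nat \<Rightarrow> nat) \<Rightarrow> nat \<Rightarrow> real \<Rightarrow> nat \<Rightarrow> nat \<Rightarrow> complex \<Rightarrow> (nat \<Rightarrow> complex)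
                  \<Rightarrow> int \<Rightarrow> int \<Rightarrow> complex \<Rightarrow> complex" where
  "onepY \<nu> \<alpha> p0 N m u \<omega> j e v =
     (if j = -1 then 0 else (1 + Yf \<nu> \<alpha> p0 N m u \<omega> j v) powi e)"

end

theory Submission
  imports Defs "HOL-Complex_Analysis.Complex_Analysis"
begin


lemma sinh_shift_pi: "sinh (z + \<i> * of_real pi) = - sinh (z::complex)"
proof -
  have e0: "exp (-(\<i> * of_real pi)) = (-1::complex)"
    by (simp add: exp_minus)
  have e1: "exp (z + \<i> * of_real pi) = - exp z" by (simp add: exp_add)
  have e2: "exp (-(z + \<i> * of_real pi)) = - exp (-z)"
    using e0 exp_add[of "-z" "-(\<i> * of_real pi)"] by simp
  show ?thesis unfolding sinh_field_def e1 e2 by (simp add: field_simps)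
qed

lemma prod_neg: "(\<Prod>k\<in>A. - f k) = (-1) ^ card A * (\<Prod>k\<in>A. (f k :: 'a::comm_ring_1))"
proof -
  have "(\<Prod>k\<in>A. - f k) = (\<Prod>k\<in>A. (-1) * f k)" by simp
  also have "\<dots> = (\<Prod>k\<in>A. -1) * (\<Prod>k\<in>A. f k)" by (rule prod.distrib)
  finally show ?thesis by simp
qed

lemma ev_translate:
  assumes "\<forall>\<^sub>\<approx>x. P (x::complex)"
  shows "\<forall>\<^sub>\<approx>x. P (x + c)"
proof -
  have "{x. \<not> P x} sparse_in UNIV" using assms by (simp add: eventually_cosparse)
  then have "(+) (-c) ` {x. \<not> P x} sparse_in UNIV" by (rule sparse_in_translate_UNIV)
  moreover have "(+) (-c) ` {x. \<not> P x} = {x. \<not> P (x + c)}"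
    by (auto simp: image_iff intro!: exI[where x="_ + c"])
  ultimately show ?thesis by (simp add: eventually_cosparse)
qed

lemma entire_alt:
  assumes "f analytic_on UNIV"
  shows "(\<forall>x. f x = (0::complex)) \<or> (\<forall>\<^sub>\<approx>x. f x \<noteq> 0)"
  using nicely_meromorphic_imp_constant_or_avoid[OF analytic_on_imp_nicely_meromorphic_on[OF assms], of 0]
  by auto

lemma cosparse_not_false: "\<not> (\<forall>\<^sub>\<approx>x::complex. False)"
proof
  assume "\<forall>\<^sub>\<approx>x::complex. False"
  then have "cosparse (UNIV::complex set) = bot" by (simp add: eventually_False)
  then show False by simp
qed

lemma entire_eq:
  assumes "f analytic_on UNIV" "g analytic_on UNIV" "\<forall>\<^sub>\<approx>x. f x = (g x :: complex)"
  shows "f x = g x"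
proof -
  have "(\<lambda>x. f x - g x) analytic_on UNIV" using assms by (intro analytic_intros)
  from entire_alt[OF this] show ?thesis
  proof
    assume "\<forall>\<^sub>\<approx>x. f x - g x \<noteq> 0"
    with assms(3) have "\<forall>\<^sub>\<approx>x::complex. False" by eventually_elim auto
    with cosparse_not_false show ?thesis by blast
  qed auto
qed

lemma sinh_i_real: "sinh (\<i> * complex_of_real t) = \<i> * of_real (sin t)"
proof -
  have "sinh (\<i> * complex_of_real t) = -\<i> * sin (\<i> * (\<i> * complex_of_real t))" by (rule sinh_conv_sin)
  also have "\<i> * (\<i> * complex_of_real t) = - of_real t" by (simp add: mult.assoc[symmetric])
  finally show ?thesis by (simp add: sin_of_real)
qed

lemma msum_Suc: "msum \<nu> (Suc r) = msum \<nu> r + int (\<nu> (Suc r))"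
  unfolding msum_def by simp

lemma pseq_formula: "pseq \<nu> p0 r = (-1)^r * (real_of_int (zz \<nu> r) * p0 - real_of_int (yy \<nu> r))"
proof (induction r rule: nat_less_induct)
  case (1 r)
  show ?case
  proof (cases r)
    case 0 then show ?thesis by simp
  next
    case (Suc r') note r = Suc
    show ?thesis
    proof (cases r')
      case 0 then show ?thesis using r by simp
    next
      case (Suc r'') 
      have IH1: "pseq \<nu> p0 r'' = (-1)^r'' * (real_of_int (zz \<nu> r'') * p0 - real_of_int (yy \<nu> r''))"
        using 1 r Suc by auto
      have IH2: "pseq \<nu> p0 (Suc r'') = (-1)^(Suc r'') * (real_of_int (zz \<nu> (Suc r'')) * p0 - real_of_int (yy \<nu> (Suc r'')))"
        using 1 r Suc by auto
      have "pseq \<nu> p0 r = pseq \<nu> p0 r'' - real (\<nu> (Suc r'')) * pseq \<nu> p0 (Suc r'')" using r Suc by simp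
      then show ?thesis unfolding IH1 IH2 using r Suc by (simp add: algebra_simps)
    qed
  qed
qed

lemma det_yz: "yy \<nu> (Suc r) * zz \<nu> r - yy \<nu> r * zz \<nu> (Suc r) = (-1)^r"
proof (induction r)
  case 0 then show ?case by simp
next
  case (Suc r)
  then show ?case by (simp add: algebra_simps)
qed

lemma yy_nonneg: "0 \<le> yy \<nu> r"
  by (induction \<nu> r rule: yy.induct) auto

lemma zz_nonneg: "0 \<le> zz \<nu> r"
  by (induction \<nu> r rule: zz.induct) auto

locale cfl =
  fixes \<nu> :: "nat \<Rightarrow> nat" and \<alpha> :: nat
  assumes alpha: "\<alpha> \<ge> 1" and nu_pos: "\<forall>j\<in>{1..\<alpha>}. \<nu> j \<ge> 1" and nu_last: "\<nu> \<alpha> \<ge> 2"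
begin

abbreviation "M \<equiv> msum \<nu>"
abbreviation "y \<equiv> yy \<nu>"
abbreviation "z \<equiv> zz \<nu>"

lemma M_mono_strict: "r < r' \<Longrightarrow> r' \<le> \<alpha> \<Longrightarrow> M r < M r'"
proof (induction r' arbitrary: r)
  case 0 then show ?case by simp
next
  case (Suc r')
  have "\<nu> (Suc r') \<ge> 1" using Suc.prems nu_pos by auto
  then have "M r' < M (Suc r')" unfolding msum_Suc by simp
  moreover have "r < r' \<Longrightarrow> M r < M r'" using Suc by auto
  ultimately show ?case using Suc.prems by (cases "r = r'") auto
qed

lemma M_mono: "r \<le> r' \<Longrightarrow> r' \<le> \<alpha> \<Longrightarrow> M r \<le> M r'"
  using M_mono_strict by (cases "r = r'") (auto intro: less_imp_le)

lemma rw_eq: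
  assumes "q < \<alpha>" "M q \<le> j" "j < M (Suc q)"
  shows "rw \<nu> \<alpha> j = q"
  unfolding rw_def
proof (rule the_equality)
  show "q < \<alpha> \<and> M q \<le> j \<and> j < M (Suc q)" using assms by auto
  fix r assume r: "r < \<alpha> \<and> M r \<le> j \<and> j < M (Suc r)"
  show "r = q"
  proof (rule ccontr)
    assume "r \<noteq> q"
    then consider "r < q" | "q < r" by linarith
    then show False
    proof cases
      case 1 then have "M (Suc r) \<le> M q" using M_mono assms by auto
      then show False using r assms by auto
    next
      case 2 then have "M (Suc q) \<le> M r" using M_mono r by auto
      then show False using r assms by auto
    qed
  qed
qed

lemma rnt_eq:
  assumes "q < \<alpha>" "M q < j" "j \<le> M (Suc q)"
  shows "rnt \<nu> \<alpha> j = q"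
  unfolding rnt_def
proof (rule the_equality)
  show "q < \<alpha> \<and> M q < j \<and> j \<le> M (Suc q)" using assms by auto
  fix r assume r: "r < \<alpha> \<and> M r < j \<and> j \<le> M (Suc r)"
  show "r = q"
  proof (rule ccontr)
    assume "r \<noteq> q"
    then consider "r < q" | "q < r" by linarith
    then show False
    proof cases
      case 1 then have "M (Suc r) \<le> M q" using M_mono assms by auto
      then show False using r assms by auto
    next
      case 2 then have "M (Suc q) \<le> M r" using M_mono r by auto
      then show False using r assms by auto
    qed
  qed
qed

lemma nat_int_Suc: "nat (int r + 1) = Suc r" by arith
lemma ycf_nat: "ycf \<nu> (int r) = y (Suc r)" "ycf \<nu> (int r - 1) = y r"
  unfolding ycf_def by (simp_all add: nat_int_Suc)
lemma zcf_nat: "zcf \<nu> (int r) = z (Suc r)" "zcf \<nu> (int r - 1) = z r"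
  unfolding zcf_def by (simp_all add: nat_int_Suc)

lemma ntil_eq:
  assumes "q < \<alpha>" "M q < j" "j \<le> M (Suc q)"
  shows "ntil \<nu> \<alpha> j = y q + (j - M q) * y (Suc q)"
  unfolding ntil_def Let_def rnt_eq[OF assms] ycf_nat ..

lemma wcf_eq:
  assumes "q < \<alpha>" "M q \<le> j" "j < M (Suc q)"
  shows "wcf \<nu> \<alpha> j = z q + (j - M q) * z (Suc q) - 1"
  unfolding wcf_def Let_def rw_eq[OF assms] zcf_nat ..

lemma y_pos: "r \<le> \<alpha> \<Longrightarrow> 1 \<le> y (Suc r)"
proof (induction r rule: nat_less_induct)
  case (1 r)
  show ?case
  proof (cases r)
    case 0 then show ?thesis by simp
  next
    case (Suc r')
    have "1 \<le> y (Suc r')" using 1 Suc by auto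
    moreover have "\<nu> (Suc r') \<ge> 1" using nu_pos 1 Suc by auto
    ultimately have "1 * 1 \<le> int (\<nu> (Suc r')) * y (Suc r')"
      by (intro mult_mono) auto
    then show ?thesis using Suc yy_nonneg[of \<nu> r'] by simp
  qed
qed

lemma y_mono: "r \<le> \<alpha> \<Longrightarrow> y r \<le> y (Suc r)"
proof (cases r)
  case 0 then show ?thesis by simp
next
  case (Suc r')
  assume "r \<le> \<alpha>"
  then have "\<nu> (Suc r') \<ge> 1" using nu_pos Suc by auto
  moreover have "0 \<le> y (Suc r')" by (rule yy_nonneg)
  ultimately have "y (Suc r') \<le> int (\<nu> (Suc r')) * y (Suc r')"
    by (simp add: mult_le_cancel_right1 )
  then show ?thesis using Suc yy_nonneg[of \<nu> r'] by simp
qed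

lemma y_mono': "r \<le> r' \<Longrightarrow> r' \<le> Suc \<alpha> \<Longrightarrow> y r \<le> y r'"
proof (induction r' arbitrary: r)
  case 0 then show ?case by simp
next
  case (Suc r')
  show ?case
  proof (cases "r = Suc r'")
    case False
    then have "y r \<le> y r'" using Suc by auto
    also have "y r' \<le> y (Suc r')" using Suc.prems by (intro y_mono) auto
    finally show ?thesis .
  qed simp
qed

end

locale cfl2 = cfl +
  fixes p0 :: real
  assumes cf: "p0 = cfval \<nu> \<alpha>" and p0_gt: "p0 > 2"
begin

lemma cfrec_ge1: "(\<forall>i\<in>{j..j+k}. \<nu> i \<ge> 1) \<Longrightarrow> cfrec \<nu> k j \<ge> 1"
proof (induction k arbitrary: j)
  case 0 then show ?case by simp
next
  case (Suc k)
  have c: "cfrec \<nu> k (Suc j) \<ge> 1" using Suc.prems by (intro Suc.IH) auto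
  have a: "1 \<le> real (\<nu> j)" using Suc.prems by auto
  have b: "0 \<le> 1 / cfrec \<nu> k (Suc j)" using c by simp
  show ?case using a b by (simp only: cfrec.simps)
qed

definition tl where "tl r = cfrec \<nu> (\<alpha> - Suc r) (Suc r)"

lemma tl_pos: "r < \<alpha> \<Longrightarrow> tl r \<ge> 1"
  unfolding tl_def using nu_pos by (intro cfrec_ge1) auto

lemma tl_step: "Suc r < \<alpha> \<Longrightarrow> tl r = real (\<nu> (Suc r)) + 1 / tl (Suc r)"
proof -
  assume a: "Suc r < \<alpha>"
  then have "\<alpha> - Suc r = Suc (\<alpha> - Suc (Suc r))" by simp
  then show ?thesis unfolding tl_def by simp
qed

lemma conv: "r < \<alpha> \<Longrightarrow> p0 * (tl r * z (Suc r) + z r) = tl r * y (Suc r) + y r"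
proof (induction r)
  case 0
  have "tl 0 = p0" unfolding tl_def cf cfval_def by simp
  then show ?case by simp
next
  case (Suc r)
  have t: "tl r = real (\<nu> (Suc r)) + 1 / tl (Suc r)" using Suc.prems by (intro tl_step)
  have tp: "tl (Suc r) \<ge> 1" using Suc.prems by (intro tl_pos)
  have IH: "p0 * (tl r * z (Suc r) + z r) = tl r * y (Suc r) + y r" using Suc by auto
  have tt: "tl (Suc r) * tl r = tl (Suc r) * real (\<nu> (Suc r)) + 1" unfolding t using tp by (simp add: field_simps)
  have "tl (Suc r) * (p0 * (tl r * z (Suc r) + z r)) = tl (Suc r) * (tl r * y (Suc r) + y r)" using IH by simp
  then have "p0 * ((tl (Suc r) * tl r) * z (Suc r) + tl (Suc r) * z r) = (tl (Suc r) * tl r) * y (Suc r) + tl (Suc r) * y r"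
    by (simp add: algebra_simps)
  then have "p0 * ((tl (Suc r) * real (\<nu> (Suc r)) + 1) * z (Suc r) + tl (Suc r) * z r) = (tl (Suc r) * real (\<nu> (Suc r)) + 1) * y (Suc r) + tl (Suc r) * y r"
    unfolding tt .
  then show ?case by (simp add: algebra_simps)
qed

lemma p0_ab: "p0 * real_of_int (z (Suc \<alpha>)) = real_of_int (y (Suc \<alpha>))"
proof -
  have "tl (\<alpha> - 1) = real (\<nu> \<alpha>)" unfolding tl_def using alpha by simp
  moreover have "p0 * (tl (\<alpha> - 1) * z \<alpha> + z (\<alpha> - 1)) = tl (\<alpha> - 1) * y \<alpha> + y (\<alpha> - 1)"
    using conv[of "\<alpha> - 1"] alpha by simp
  moreover have "Suc \<alpha> = Suc (Suc (\<alpha> - 1))" using alpha by simp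
  then have "y (Suc \<alpha>) = y (\<alpha> - 1) + int (\<nu> \<alpha>) * y \<alpha>" "z (Suc \<alpha>) = z (\<alpha> - 1) + int (\<nu> \<alpha>) * z \<alpha>"
    using alpha by (cases \<alpha>; simp)+
  ultimately show ?thesis by (simp add: algebra_simps)
qed

lemma z_pos: "z (Suc \<alpha>) > 0"
proof (rule ccontr)
  assume "\<not> z (Suc \<alpha>) > 0"
  then have "z (Suc \<alpha>) = 0" using zz_nonneg[of \<nu> "Suc \<alpha>"] by simp
  then have "y (Suc \<alpha>) = 0" using p0_ab by simp
  moreover have "1 \<le> y (Suc \<alpha>)" by (rule y_pos) simp
  ultimately show False by simp
qed

lemma two_y_less: "1 \<le> r \<Longrightarrow> r \<le> \<alpha> \<Longrightarrow> 2 * y r < y (Suc \<alpha>)"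
proof -
  assume r: "1 \<le> r" "r \<le> \<alpha>"
  have yr: "y r \<le> y \<alpha>" using r by (intro y_mono') auto
  have rec: "y (Suc \<alpha>) = y (\<alpha> - 1) + int (\<nu> \<alpha>) * y \<alpha>"
  proof -
    show ?thesis using alpha by (cases \<alpha>) auto
  qed
  have ya: "1 \<le> y \<alpha>" using y_pos[of "\<alpha> - 1"] alpha by simp
  show ?thesis
  proof (cases "\<alpha> = 1")
    case True
    have "p0 = real (\<nu> 1)" unfolding cf cfval_def using True by simp
    then have "\<nu> 1 \<ge> 3" using p0_gt by simp
    then show ?thesis using True r rec by simp
  next
    case False
    then have "1 \<le> y (\<alpha> - 1)" using y_pos[of "\<alpha> - 2"] alpha by (simp add: Suc_diff_Suc numeral_2_eq_2)
    moreover have "2 * y \<alpha> \<le> int (\<nu> \<alpha>) * y \<alpha>" using nu_last ya by (intro mult_right_mono) auto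
    ultimately show ?thesis using rec yr by linarith
  qed
qed

lemma sin_nz: "1 \<le> r \<Longrightarrow> r \<le> \<alpha> \<Longrightarrow> sin (2 * (pi / p0) * real (nat (y r))) \<noteq> 0"
proof
  assume r: "1 \<le> r" "r \<le> \<alpha>" and s: "sin (2 * (pi / p0) * real (nat (y r))) = 0"
  define k where "k = y r"
  have "Suc (r - 1) = r" using r by simp
  moreover have "1 \<le> y (Suc (r-1))" by (rule y_pos) (use r in auto)
  ultimately have k0: "0 < k" unfolding k_def by simp
  have kl: "2 * k < y (Suc \<alpha>)" unfolding k_def by (rule two_y_less[OF r])
  obtain i :: int where i: "2 * (pi / p0) * real (nat k) = of_int i * pi"
    using s unfolding sin_zero_iff_int2 k_def by blast
  have zp: "z (Suc \<alpha>) > 0" by (rule z_pos)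
  have "p0 > 0" using p0_gt by simp
  have rk: "real (nat k) = real_of_int k" using k0 by simp
  have e1: "2 * real_of_int k = real_of_int i * p0"
  proof -
    have "2 * pi * real_of_int k / p0 = real_of_int i * pi" using i rk by (simp add: mult_ac)
    then have "2 * pi * real_of_int k = real_of_int i * pi * p0" using \<open>p0 > 0\<close> by (simp add: field_simps)
    then show ?thesis by (simp add: mult_ac)
  qed
  have "2 * real_of_int k * real_of_int (z (Suc \<alpha>)) = (real_of_int i * p0) * real_of_int (z (Suc \<alpha>))"
    unfolding e1 ..
  also have "\<dots> = real_of_int i * real_of_int (y (Suc \<alpha>))" by (simp only: mult.assoc p0_ab)
  finally have "real_of_int (2 * k * z (Suc \<alpha>)) = real_of_int (i * y (Suc \<alpha>))" by simp
  then have eq: "2 * k * z (Suc \<alpha>) = i * y (Suc \<alpha>)" by (simp only: of_int_eq_iff)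
  have det: "y (Suc \<alpha>) * z \<alpha> - y \<alpha> * z (Suc \<alpha>) = (-1)^\<alpha>" by (rule det_yz)
  have "y (Suc \<alpha>) dvd 2 * k * (y (Suc \<alpha>) * z \<alpha> - y \<alpha> * z (Suc \<alpha>))"
  proof -
    have "2 * k * (y (Suc \<alpha>) * z \<alpha> - y \<alpha> * z (Suc \<alpha>)) = y (Suc \<alpha>) * (2 * k * z \<alpha>) - y \<alpha> * (2 * k * z (Suc \<alpha>))"
      by (simp add: algebra_simps)
    also have "\<dots> = y (Suc \<alpha>) * (2 * k * z \<alpha> - y \<alpha> * i)" unfolding eq by (simp add: algebra_simps)
    finally show ?thesis by simp
  qed
  then have d: "y (Suc \<alpha>) dvd 2 * k * (-1)^\<alpha>" unfolding det .
  have "y (Suc \<alpha>) dvd 2 * k"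
  proof (cases "even \<alpha>")
    case True then show ?thesis using d by simp
  next
    case False then show ?thesis using d by simp
  qed
  then have "y (Suc \<alpha>) \<le> 2 * k" using k0 by (intro zdvd_imp_le) auto
  with kl show False by simp
qed

end

locale tsys = fixes p0 :: real and N m :: nat and u :: complex and \<omega> :: "nat \<Rightarrow> complex"
  assumes p0pos: "p0 > 0"
begin
abbreviation "\<theta> \<equiv> pi / p0"
abbreviation "Q \<equiv> Qf \<theta> m \<omega>"
abbreviation "T \<equiv> Tf \<theta> N m u \<omega>"
definition G where "G x = phif \<theta> N (x - \<i>*(u+2)) * phif \<theta> N (x + \<i>*u) / (Q x * Q (x - 2*\<i>))"
definition J where "J x (a::int) (n::nat) = (\<Sum>j=1..n. G (x + \<i> * of_int (a + 2*int j)))"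
definition TI where "TI a b x = Q (x + \<i>* of_int b) * Q (x + \<i>* of_int a) * J x a (nat ((b - a) div 2))"

lemma T_alt: "T n v = Q (v + \<i>* of_nat n) * Q (v - \<i>* of_nat n) * (\<Sum>j=1..n. G (v + \<i>*(2* of_nat j - of_nat n)))"
  unfolding Tf_def sum_distrib_left
proof (rule sum.cong[OF refl])
  fix j assume "j \<in> {1..n}"
  have a: "v - \<i> * (u + of_nat n + 2 - 2 * of_nat j) = (v + \<i>*(2* of_nat j - of_nat n)) - \<i>*(u+2)"
    by (simp add: algebra_simps)
  have b: "v + \<i> * (u - of_nat n + 2 * of_nat j) = (v + \<i>*(2* of_nat j - of_nat n)) + \<i>*u"
    by (simp add: algebra_simps)
  have c: "v + \<i> * (2 * of_nat j - of_nat n - 2) = (v + \<i>*(2* of_nat j - of_nat n)) - 2*\<i>"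
    by (simp add: algebra_simps)
  show "phif \<theta> N (v - \<i> * (u + of_nat n + 2 - 2 * of_nat j)) * phif \<theta> N (v + \<i> * (u - of_nat n + 2 * of_nat j)) *
         (Q (v + \<i> * of_nat n) * Q (v - \<i> * of_nat n)) /
         (Q (v + \<i> * (2 * of_nat j - of_nat n)) * Q (v + \<i> * (2 * of_nat j - of_nat n - 2))) =
         Q (v + \<i> * of_nat n) * Q (v - \<i> * of_nat n) * G (v + \<i> * (2 * of_nat j - of_nat n))"
    unfolding a b c G_def by (simp add: field_simps)
qed

lemma T_TI: "T n (x + \<i>* of_int c) = TI (c - int n) (c + int n) x"
proof -
  have n: "nat ((c + int n - (c - int n)) div 2) = n" by simp
  show ?thesis unfolding T_alt TI_def n J_def
    apply (intro arg_cong2[where f="(*)"] sum.cong refl arg_cong[where f=G] arg_cong[where f=Q])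
    by (simp_all add: algebra_simps)
qed

lemma J_add: "J x a (p + q) = J x a p + J x (a + 2*int p) q"
proof -
  have "J x a (p+q) = (\<Sum>j=1..p. G (x + \<i> * of_int (a + 2*int j))) + (\<Sum>j=p+1..p+q. G (x + \<i> * of_int (a + 2*int j)))"
    unfolding J_def by (rule sum.ub_add_nat) simp
  also have "(\<Sum>j=p+1..p+q. G (x + \<i> * of_int (a + 2*int j))) = (\<Sum>j=1..q. G (x + \<i> * of_int (a + 2*int p + 2*int j)))"
    by (rule sum.reindex_bij_witness[where i="\<lambda>j. j + p" and j="\<lambda>j. j - p"]) (auto simp: algebra_simps)
  finally show ?thesis unfolding J_def .
qed

lemma TI_J: "TI a (a + 2*int p) x = Q (x + \<i>* of_int (a + 2*int p)) * Q (x + \<i>* of_int a) * J x a p"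
  unfolding TI_def by simp

lemma pluecker:
  "TI (a + 2*int p) (a + 2*int p + 2*int q + 2*int r) x * TI a (a + 2*int p + 2*int q) x
   = TI a (a + 2*int p + 2*int q + 2*int r) x * TI (a + 2*int p) (a + 2*int p + 2*int q) x
   + TI (a + 2*int p + 2*int q) (a + 2*int p + 2*int q + 2*int r) x * TI a (a + 2*int p) x"
proof -
  have e1: "a + 2*int p + 2*int q + 2*int r = (a + 2*int p) + 2*int (q + r)" by simp
  have e2: "a + 2*int p + 2*int q + 2*int r = a + 2*int (p + q + r)" by simp
  have e3: "a + 2*int p + 2*int q = a + 2*int (p + q)" by simp
  have e4: "a + 2*int p + 2*int q = (a + 2*int p) + 2*int q" by simp
  have e5: "a + 2*int p + 2*int q + 2*int r = (a + 2*int p + 2*int q) + 2*int r" by simp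
  show ?thesis
    apply (subst e1, subst TI_J)
    apply (subst e3, subst TI_J)
    apply (subst e2, subst TI_J)
    apply (subst e4, subst TI_J)
    apply (subst e5, subst TI_J)
    apply (subst TI_J)
    apply (simp only: J_add add.assoc[symmetric])
    apply (simp add: algebra_simps)
    done
qed


abbreviation "P2 \<equiv> 2 * \<i> * complex_of_real p0"

lemma sh_shift: "sinh (complex_of_real (\<theta>/2) * (x + P2)) = - sinh (complex_of_real (\<theta>/2) * x)"
proof -
  have "complex_of_real (\<theta>/2) * (x + P2) = complex_of_real (\<theta>/2) * x + \<i> * of_real pi"
    using p0pos by (simp add: field_simps)
  then show ?thesis by (simp add: sinh_shift_pi)
qed

lemma Q_shift: "Q (x + P2) = (-1)^m * Q x"
proof -
  have "Q (x + P2) = (\<Prod>k=1..m. - sinh (complex_of_real (\<theta>/2) * (x - \<omega> k)))"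
    unfolding Qf_def
  proof (rule prod.cong[OF refl])
    fix k show "sinh (complex_of_real (\<theta>/2) * (x + P2 - \<omega> k)) = - sinh (complex_of_real (\<theta>/2) * (x - \<omega> k))"
      using sh_shift[of "x - \<omega> k"] by (simp add: algebra_simps)
  qed
  then show ?thesis unfolding prod_neg Qf_def by simp
qed

lemma phi_shift: "phif \<theta> N (x + P2) = (-1)^(N div 2) * phif \<theta> N x"
  unfolding phif_def sh_shift by (simp add: power_mult_distrib[symmetric])

lemma G_shift: "G (x + P2) = G x"
proof -
  have a: "x + P2 - \<i> * (u + 2) = (x - \<i> * (u + 2)) + P2" by (simp add: algebra_simps)
  have b: "x + P2 + \<i> * u = (x + \<i> * u) + P2" by (simp add: algebra_simps)
  have c: "x + P2 - 2 * \<i> = (x - 2 * \<i>) + P2" by (simp add: algebra_simps)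
  have d: "((-1::complex)^k) * (-1)^k = 1" for k by (simp add: power_mult_distrib[symmetric])
  show ?thesis unfolding G_def a b c phi_shift Q_shift
    by (simp add: field_simps d)
qed

lemma T_shift: "T n (x + P2) = T n x"
proof -
  have a: "x + P2 + \<i> * of_nat n = (x + \<i> * of_nat n) + P2" by (simp add: algebra_simps)
  have b: "x + P2 - \<i> * of_nat n = (x - \<i> * of_nat n) + P2" by (simp add: algebra_simps)
  have c: "x + P2 + \<i> * (2 * of_nat j - of_nat n) = (x + \<i> * (2 * of_nat j - of_nat n)) + P2" for j
    by (simp add: algebra_simps)
  have d: "((-1::complex)^k) * (-1)^k = 1" for k by (simp add: power_mult_distrib[symmetric])
  show ?thesis unfolding T_alt a b c Q_shift G_shift
    by (simp add: d algebra_simps)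
qed

lemma T_shift_int: "T n (x + of_int t * P2) = T n x"
proof (induction t arbitrary: x rule: int_induct[where k=0])
  case base then show ?case by simp
next
  case (step1 i)
  have "T n (x + of_int (i + 1) * P2) = T n ((x + of_int i * P2) + P2)"
    by (rule arg_cong[where f="T n"]) (simp add: algebra_simps)
  then show ?case using T_shift step1 by simp
next
  case (step2 i)
  have "T n (x + of_int (i - 1) * P2) = T n ((x + of_int (i - 1) * P2) + P2)" using T_shift by simp
  also have "\<dots> = T n (x + of_int i * P2)"
    by (rule arg_cong[where f="T n"]) (simp add: algebra_simps)
  finally show ?case using step2 by simp
qed


lemma pluecker':
  assumes "A \<le> B" "B \<le> C" "C \<le> D" "even (B - A)" "even (C - B)" "even (D - C)"
  shows "TI B D x * TI A C x = TI A D x * TI B C x + TI C D x * TI A B x"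
proof -
  obtain p where p: "B - A = 2 * int p" using assms(1,4) by (metis evenE zero_le_mult_iff zero_le_numeral nonneg_int_cases diff_ge_0_iff_ge mult_le_0_iff not_numeral_le_zero)
  obtain q where q: "C - B = 2 * int q" using assms(2,5) by (metis evenE zero_le_mult_iff zero_le_numeral nonneg_int_cases diff_ge_0_iff_ge mult_le_0_iff not_numeral_le_zero)
  obtain r where r: "D - C = 2 * int r" using assms(3,6) by (metis evenE zero_le_mult_iff zero_le_numeral nonneg_int_cases diff_ge_0_iff_ge mult_le_0_iff not_numeral_le_zero)
  have "B = A + 2 * int p" "C = A + 2 * int p + 2 * int q" "D = A + 2 * int p + 2 * int q + 2 * int r"
    using p q r by linarith+
  then show ?thesis using pluecker[of A p q r x] by simp
qed

definition CR where "CR x (n::int) (k::int) = T (nat (n+k)) x * T (nat (n-k)) x / (T (nat k) (x + \<i> * of_int n) * T (nat k) (x - \<i> * of_int n))"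

lemma T_TI': "0 \<le> n \<Longrightarrow> T (nat n) (x + \<i> * of_int c) = TI (c - n) (c + n) x"
  using T_TI[of "nat n" x c] by simp

lemma CR_TI:
  assumes "0 \<le> k" "k \<le> n"
  shows "CR (x + \<i> * of_int c) n k = TI (c-n-k) (c+n+k) x * TI (c+k-n) (c+n-k) x / (TI (c+n-k) (c+n+k) x * TI (c-n-k) (c+k-n) x)"
proof -
  have e1: "x + \<i> * of_int c + \<i> * of_int n = x + \<i> * of_int (c + n)" by (simp add: algebra_simps)
  have e2: "x + \<i> * of_int c - \<i> * of_int n = x + \<i> * of_int (c - n)" by (simp add: algebra_simps)
  have f1: "T (nat (n+k)) (x + \<i> * of_int c) = TI (c-n-k) (c+n+k) x"
    using T_TI'[of "n+k" x c] assms by (simp add: algebra_simps)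
  have f2: "T (nat (n-k)) (x + \<i> * of_int c) = TI (c+k-n) (c+n-k) x"
    using T_TI'[of "n-k" x c] assms by (simp add: algebra_simps)
  have f3: "T (nat k) (x + \<i> * of_int (c+n)) = TI (c+n-k) (c+n+k) x"
    using T_TI'[of "k" x "c+n"] assms by (simp add: algebra_simps)
  have f4: "T (nat k) (x + \<i> * of_int (c-n)) = TI (c-n-k) (c+k-n) x"
    using T_TI'[of "k" x "c-n"] assms by (simp add: algebra_simps)
  show ?thesis unfolding CR_def e1 e2 f1 f2 f3 f4 ..
qed

lemma CR_onep:
  assumes "0 \<le> k" "k \<le> n" "TI (c+n-k) (c+n+k) x \<noteq> 0" "TI (c-n-k) (c+k-n) x \<noteq> 0"
  shows "1 + CR (x + \<i> * of_int c) n k = TI (c+k-n) (c+n+k) x * TI (c-n-k) (c+n-k) x / (TI (c+n-k) (c+n+k) x * TI (c-n-k) (c+k-n) x)"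
proof -
  have P: "TI (c+k-n) (c+n+k) x * TI (c-n-k) (c+n-k) x = TI (c-n-k) (c+n+k) x * TI (c+k-n) (c+n-k) x + TI (c+n-k) (c+n+k) x * TI (c-n-k) (c+k-n) x"
    by (rule pluecker') (use assms in auto)
  show ?thesis unfolding CR_TI[OF assms(1,2)] P using assms(3,4) by (simp add: field_simps)
qed


lemma id_i_gen:
  assumes k: "0 \<le> k" "2*k \<le> n"
    and nz: "TI (n-2*k) n x \<noteq> 0" "TI (-n-2*k) (-n) x \<noteq> 0" "TI n (n+2*k) x \<noteq> 0" "TI (-n) (2*k-n) x \<noteq> 0"
  shows "CR (x + \<i> * of_int (-k)) n k * CR (x + \<i> * of_int k) n k
       = (1 + CR (x + \<i> * of_int 0) (n-k) k) * (1 + CR (x + \<i> * of_int 0) (n+k) k)"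
proof -
  have a: "CR (x + \<i> * of_int (-k)) n k = TI (-n-2*k) n x * TI (-n) (n-2*k) x / (TI (n-2*k) n x * TI (-n-2*k) (-n) x)"
    using CR_TI[of k n x "-k"] k by (simp add: algebra_simps)
  have b: "CR (x + \<i> * of_int k) n k = TI (-n) (n+2*k) x * TI (2*k-n) n x / (TI n (n+2*k) x * TI (-n) (2*k-n) x)"
    using CR_TI[of k n x "k"] k by (simp add: algebra_simps)
  have c: "1 + CR (x + \<i> * of_int 0) (n-k) k = TI (2*k-n) n x * TI (-n) (n-2*k) x / (TI (n-2*k) n x * TI (-n) (2*k-n) x)"
    using CR_onep[of k "n-k" 0 x] k nz by (simp add: algebra_simps)
  have d: "1 + CR (x + \<i> * of_int 0) (n+k) k = TI (-n) (n+2*k) x * TI (-n-2*k) n x / (TI n (n+2*k) x * TI (-n-2*k) (-n) x)"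
    using CR_onep[of k "n+k" 0 x] k nz by (simp add: algebra_simps)
  show ?thesis unfolding a b c d using nz by (simp add: field_simps)
qed

lemma CR_TI_gen:
  assumes "A = c-n-k" "B = c+k-n" "C = c+n-k" "D = c+n+k" "0 \<le> k" "k \<le> n"
  shows "CR (x + \<i> * of_int c) n k = TI A D x * TI B C x / (TI C D x * TI A B x)"
  using CR_TI[of k n x c] assms by simp

lemma CR_onep_gen:
  assumes "A = c-n-k" "B = c+k-n" "C = c+n-k" "D = c+n+k" "0 \<le> k" "k \<le> n" "TI C D x \<noteq> 0" "TI A B x \<noteq> 0"
  shows "1 + CR (x + \<i> * of_int c) n k = TI B D x * TI A C x / (TI C D x * TI A B x)"
  using CR_onep[of k n c x] assms by simp

lemma id_i_t0:
  assumes k: "0 \<le> kp" "kp \<le> k"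
    and nz: "TI (-3*k-kp) (-k-kp) x \<noteq> 0" "TI (-k+kp) (k+kp) x \<noteq> 0" "TI (-k-kp) (-k+kp) x \<noteq> 0" "TI (-k-kp) (k-kp) x \<noteq> 0" "TI (k+kp) (3*k+kp) x \<noteq> 0" "TI (k-kp) (k+kp) x \<noteq> 0"
  shows "CR (x + \<i> * of_int (-k)) (k+kp) (k) * CR (x + \<i> * of_int (k)) (k+kp) (k)
       = inverse (1 + CR (x + \<i> * of_int 0) (k) (kp)) * (1 + CR (x + \<i> * of_int 0) (2*k+kp) (k))"
proof -
  have e0: "CR (x + \<i> * of_int (-k)) (k+kp) (k) = TI (-3*k-kp) (k+kp) x * TI (-k-kp) (-k+kp) x / (TI (-k+kp) (k+kp) x * TI (-3*k-kp) (-k-kp) x)"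
    by (rule CR_TI_gen) (use k nz in auto)
  have e1: "CR (x + \<i> * of_int (k)) (k+kp) (k) = TI (-k-kp) (3*k+kp) x * TI (k-kp) (k+kp) x / (TI (k+kp) (3*k+kp) x * TI (-k-kp) (k-kp) x)"
    by (rule CR_TI_gen) (use k nz in auto)
  have e2: "(1 + CR (x + \<i> * of_int 0) (k) (kp)) = TI (-k+kp) (k+kp) x * TI (-k-kp) (k-kp) x / (TI (k-kp) (k+kp) x * TI (-k-kp) (-k+kp) x)"
    by (rule CR_onep_gen) (use k nz in auto)
  have e3: "inverse (1 + CR (x + \<i> * of_int 0) (k) (kp)) = TI (k-kp) (k+kp) x * TI (-k-kp) (-k+kp) x / (TI (-k+kp) (k+kp) x * TI (-k-kp) (k-kp) x)"
    unfolding e2 using nz by simp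
  have e4: "(1 + CR (x + \<i> * of_int 0) (2*k+kp) (k)) = TI (-k-kp) (3*k+kp) x * TI (-3*k-kp) (k+kp) x / (TI (k+kp) (3*k+kp) x * TI (-3*k-kp) (-k-kp) x)"
    by (rule CR_onep_gen) (use k nz in auto)
  show ?thesis unfolding e3 unfolding e2 e4 unfolding e0 e1 using nz by (simp add: field_simps)
qed

lemma id_ii_nu2:
  assumes k: "0 \<le> k" "2*k \<le> n"
    and nz: "TI (-2*k) 0 x \<noteq> 0" "TI (-2*n) (-2*n+2*k) x \<noteq> 0" "TI (-2*n) 0 x \<noteq> 0" "TI (-2*n-2*k) (-2*k) x \<noteq> 0" "TI (-2*n-2*k) (-2*n) x \<noteq> 0" "TI (2*k) (2*n+2*k) x \<noteq> 0" "TI (2*n) (2*n+2*k) x \<noteq> 0" "TI (2*n-2*k) (2*n) x \<noteq> 0" "TI 0 (2*k) x \<noteq> 0" "TI 0 (2*n) x \<noteq> 0"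
  shows "CR (x + \<i> * of_int (n-k)) (n) (k) * CR (x + \<i> * of_int (-n-k)) (n) (k) * CR (x + \<i> * of_int (n+k)) (n) (k) * CR (x + \<i> * of_int (-n+k)) (n) (k)
       = (1 + CR (x + \<i> * of_int (n)) (n-k) (k)) * (1 + CR (x + \<i> * of_int (-n)) (n-k) (k)) * (1 + CR (x + \<i> * of_int (-k)) (n+k) (n)) * (1 + CR (x + \<i> * of_int (k)) (n+k) (n)) * (1 + CR (x + \<i> * of_int (-n-k)) (n) (k)) * (1 + CR (x + \<i> * of_int (n+k)) (n) (k))"
proof -
  have e0: "CR (x + \<i> * of_int (n-k)) (n) (k) = TI (-2*k) (2*n) x * TI 0 (2*n-2*k) x / (TI (2*n-2*k) (2*n) x * TI (-2*k) 0 x)"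
    by (rule CR_TI_gen) (use k nz in auto)
  have e1: "CR (x + \<i> * of_int (-n-k)) (n) (k) = TI (-2*n-2*k) 0 x * TI (-2*n) (-2*k) x / (TI (-2*k) 0 x * TI (-2*n-2*k) (-2*n) x)"
    by (rule CR_TI_gen) (use k nz in auto)
  have e2: "CR (x + \<i> * of_int (n+k)) (n) (k) = TI 0 (2*n+2*k) x * TI (2*k) (2*n) x / (TI (2*n) (2*n+2*k) x * TI 0 (2*k) x)"
    by (rule CR_TI_gen) (use k nz in auto)
  have e3: "CR (x + \<i> * of_int (-n+k)) (n) (k) = TI (-2*n) (2*k) x * TI (-2*n+2*k) 0 x / (TI 0 (2*k) x * TI (-2*n) (-2*n+2*k) x)"
    by (rule CR_TI_gen) (use k nz in auto)
  have e4: "(1 + CR (x + \<i> * of_int (n)) (n-k) (k)) = TI (2*k) (2*n) x * TI 0 (2*n-2*k) x / (TI (2*n-2*k) (2*n) x * TI 0 (2*k) x)"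
    by (rule CR_onep_gen) (use k nz in auto)
  have e5: "(1 + CR (x + \<i> * of_int (-n)) (n-k) (k)) = TI (-2*n+2*k) 0 x * TI (-2*n) (-2*k) x / (TI (-2*k) 0 x * TI (-2*n) (-2*n+2*k) x)"
    by (rule CR_onep_gen) (use k nz in auto)
  have e6: "(1 + CR (x + \<i> * of_int (-k)) (n+k) (n)) = TI (-2*k) (2*n) x * TI (-2*n-2*k) 0 x / (TI 0 (2*n) x * TI (-2*n-2*k) (-2*k) x)"
    by (rule CR_onep_gen) (use k nz in auto)
  have e7: "(1 + CR (x + \<i> * of_int (k)) (n+k) (n)) = TI 0 (2*n+2*k) x * TI (-2*n) (2*k) x / (TI (2*k) (2*n+2*k) x * TI (-2*n) 0 x)"
    by (rule CR_onep_gen) (use k nz in auto)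
  have e8: "(1 + CR (x + \<i> * of_int (-n-k)) (n) (k)) = TI (-2*n) 0 x * TI (-2*n-2*k) (-2*k) x / (TI (-2*k) 0 x * TI (-2*n-2*k) (-2*n) x)"
    by (rule CR_onep_gen) (use k nz in auto)
  have e9: "(1 + CR (x + \<i> * of_int (n+k)) (n) (k)) = TI (2*k) (2*n+2*k) x * TI 0 (2*n) x / (TI (2*n) (2*n+2*k) x * TI 0 (2*k) x)"
    by (rule CR_onep_gen) (use k nz in auto)
  show ?thesis unfolding e4 e5 e6 e7 e8 e9 unfolding e0 e1 e2 e3 using nz by (simp add: field_simps)
qed

lemma id_ii_nu1:
  assumes k: "0 \<le> kp" "kp \<le> k"
    and nz: "TI (-2*k) 0 x \<noteq> 0" "TI (-2*k-2*kp) (-2*k) x \<noteq> 0" "TI (-2*k-2*kp) (-2*kp) x \<noteq> 0" "TI (-2*k-2*kp) 0 x \<noteq> 0" "TI (-2*kp) 0 x \<noteq> 0" "TI (-4*k-2*kp) (-2*k) x \<noteq> 0" "TI (-4*k-2*kp) (-2*k-2*kp) x \<noteq> 0" "TI (2*k) (2*k+2*kp) x \<noteq> 0" "TI (2*k) (4*k+2*kp) x \<noteq> 0" "TI (2*k+2*kp) (4*k+2*kp) x \<noteq> 0" "TI (2*kp) (2*k+2*kp) x \<noteq> 0" "TI 0 (2*k) x \<noteq> 0" "TI 0 (2*k+2*kp) x \<noteq> 0" "TI 0 (2*kp) x \<noteq> 0"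
  shows "CR (x + \<i> * of_int (kp)) (k+kp) (k) * CR (x + \<i> * of_int (-2*k-kp)) (k+kp) (k) * CR (x + \<i> * of_int (2*k+kp)) (k+kp) (k) * CR (x + \<i> * of_int (-kp)) (k+kp) (k)
       = inverse (1 + CR (x + \<i> * of_int (k+kp)) (k) (kp)) * inverse (1 + CR (x + \<i> * of_int (-k-kp)) (k) (kp)) * (1 + CR (x + \<i> * of_int (-k)) (2*k+kp) (k+kp)) * (1 + CR (x + \<i> * of_int (k)) (2*k+kp) (k+kp)) * (1 + CR (x + \<i> * of_int (-2*k-kp)) (k+kp) (k)) * (1 + CR (x + \<i> * of_int (2*k+kp)) (k+kp) (k))"
proof -
  have e0: "CR (x + \<i> * of_int (kp)) (k+kp) (k) = TI (-2*k) (2*k+2*kp) x * TI 0 (2*kp) x / (TI (2*kp) (2*k+2*kp) x * TI (-2*k) 0 x)"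
    by (rule CR_TI_gen) (use k nz in auto)
  have e1: "CR (x + \<i> * of_int (-2*k-kp)) (k+kp) (k) = TI (-4*k-2*kp) 0 x * TI (-2*k-2*kp) (-2*k) x / (TI (-2*k) 0 x * TI (-4*k-2*kp) (-2*k-2*kp) x)"
    by (rule CR_TI_gen) (use k nz in auto)
  have e2: "CR (x + \<i> * of_int (2*k+kp)) (k+kp) (k) = TI 0 (4*k+2*kp) x * TI (2*k) (2*k+2*kp) x / (TI (2*k+2*kp) (4*k+2*kp) x * TI 0 (2*k) x)"
    by (rule CR_TI_gen) (use k nz in auto)
  have e3: "CR (x + \<i> * of_int (-kp)) (k+kp) (k) = TI (-2*k-2*kp) (2*k) x * TI (-2*kp) 0 x / (TI 0 (2*k) x * TI (-2*k-2*kp) (-2*kp) x)"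
    by (rule CR_TI_gen) (use k nz in auto)
  have e4: "(1 + CR (x + \<i> * of_int (k+kp)) (k) (kp)) = TI (2*kp) (2*k+2*kp) x * TI 0 (2*k) x / (TI (2*k) (2*k+2*kp) x * TI 0 (2*kp) x)"
    by (rule CR_onep_gen) (use k nz in auto)
  have e5: "inverse (1 + CR (x + \<i> * of_int (k+kp)) (k) (kp)) = TI (2*k) (2*k+2*kp) x * TI 0 (2*kp) x / (TI (2*kp) (2*k+2*kp) x * TI 0 (2*k) x)"
    unfolding e4 using nz by simp
  have e6: "(1 + CR (x + \<i> * of_int (-k-kp)) (k) (kp)) = TI (-2*k) 0 x * TI (-2*k-2*kp) (-2*kp) x / (TI (-2*kp) 0 x * TI (-2*k-2*kp) (-2*k) x)"
    by (rule CR_onep_gen) (use k nz in auto)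
  have e7: "inverse (1 + CR (x + \<i> * of_int (-k-kp)) (k) (kp)) = TI (-2*kp) 0 x * TI (-2*k-2*kp) (-2*k) x / (TI (-2*k) 0 x * TI (-2*k-2*kp) (-2*kp) x)"
    unfolding e6 using nz by simp
  have e8: "(1 + CR (x + \<i> * of_int (-k)) (2*k+kp) (k+kp)) = TI (-2*k) (2*k+2*kp) x * TI (-4*k-2*kp) 0 x / (TI 0 (2*k+2*kp) x * TI (-4*k-2*kp) (-2*k) x)"
    by (rule CR_onep_gen) (use k nz in auto)
  have e9: "(1 + CR (x + \<i> * of_int (k)) (2*k+kp) (k+kp)) = TI 0 (4*k+2*kp) x * TI (-2*k-2*kp) (2*k) x / (TI (2*k) (4*k+2*kp) x * TI (-2*k-2*kp) 0 x)"
    by (rule CR_onep_gen) (use k nz in auto)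
  have e10: "(1 + CR (x + \<i> * of_int (-2*k-kp)) (k+kp) (k)) = TI (-2*k-2*kp) 0 x * TI (-4*k-2*kp) (-2*k) x / (TI (-2*k) 0 x * TI (-4*k-2*kp) (-2*k-2*kp) x)"
    by (rule CR_onep_gen) (use k nz in auto)
  have e11: "(1 + CR (x + \<i> * of_int (2*k+kp)) (k+kp) (k)) = TI (2*k) (4*k+2*kp) x * TI 0 (2*k+2*kp) x / (TI (2*k+2*kp) (4*k+2*kp) x * TI 0 (2*k) x)"
    by (rule CR_onep_gen) (use k nz in auto)
  show ?thesis unfolding e5 e7 unfolding e4 e6 e8 e9 e10 e11 unfolding e0 e1 e2 e3 using nz by (simp add: field_simps)
qed



lemma sq_sign: "((-1::complex)^k) * (-1)^k = 1"
  by (simp add: power_mult_distrib[symmetric])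

lemma Q_shift_nat: "Q (y - of_nat b * P2) = (-1)^(m*b) * Q y"
proof (induction b)
  case 0 then show ?case by simp
next
  case (Suc b)
  have z: "y - of_nat (Suc b) * P2 + P2 = y - of_nat b * P2" by (simp add: algebra_simps)
  have "Q (y - of_nat b * P2) = (-1)^m * Q (y - of_nat (Suc b) * P2)"
    unfolding z[symmetric] by (rule Q_shift)
  then have "(-1)^m * Q (y - of_nat b * P2) = Q (y - of_nat (Suc b) * P2)"
    using sq_sign[of m] by (simp add: mult.assoc[symmetric])
  then show ?case using Suc.IH by (simp add: power_add mult.assoc)
qed

lemma G_shift_nat: "G (y - of_nat b * P2) = G y"
proof (induction b arbitrary: y)
  case 0 then show ?case by simp
next
  case (Suc b)
  have "G (y - of_nat (Suc b) * P2) = G ((y - of_nat (Suc b) * P2) + P2)" by (rule G_shift[symmetric])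
  also have "(y - of_nat (Suc b) * P2) + P2 = y - of_nat b * P2" by (simp add: algebra_simps)
  finally show ?case using Suc.IH by simp
qed

lemma a_P2:
  assumes ab: "p0 * real b = real_of_int a"
  shows "2 * \<i> * complex_of_int a = of_nat b * P2"
proof -
  have "complex_of_int a = of_real p0 * of_nat b"
    by (metis ab of_real_mult of_real_of_int_eq of_real_of_nat_eq)
  then show ?thesis by simp
qed

lemma J_shift:
  assumes ab: "p0 * real b = real_of_int a"
  shows "J x (c - 2*a) n = J x c n"
  unfolding J_def
proof (rule sum.cong[OF refl])
  fix j
  have "x + \<i> * of_int (c - 2*a + 2*int j) = (x + \<i> * of_int (c + 2*int j)) - 2 * \<i> * complex_of_int a"
    by (simp add: algebra_simps)
  also have "\<dots> = (x + \<i> * of_int (c + 2*int j)) - of_nat b * P2" unfolding a_P2[OF ab] ..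
  finally have e: "x + \<i> * of_int (c - 2*a + 2*int j) = (x + \<i> * of_int (c + 2*int j)) - of_nat b * P2" .
  show "G (x + \<i> * of_int (c - 2*a + 2*int j)) = G (x + \<i> * of_int (c + 2*int j))"
    unfolding e by (rule G_shift_nat)
qed

lemma Q_shift_a:
  assumes ab: "p0 * real b = real_of_int a"
  shows "Q (x + \<i> * of_int (c - 2*a)) = (-1)^(m*b) * Q (x + \<i> * of_int c)"
proof -
  have "x + \<i> * of_int (c - 2*a) = (x + \<i> * of_int c) - 2 * \<i> * complex_of_int a"
    by (simp add: algebra_simps)
  also have "\<dots> = (x + \<i> * of_int c) - of_nat b * P2" unfolding a_P2[OF ab] ..
  finally have e: "x + \<i> * of_int (c - 2*a) = (x + \<i> * of_int c) - of_nat b * P2" .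
  show ?thesis unfolding e by (rule Q_shift_nat)
qed

lemma TI_shift:
  assumes ab: "p0 * real b = real_of_int a"
  shows "TI (c - 2*a) (d - 2*a) x = TI c d x"
proof -
  have "nat ((d - 2*a - (c - 2*a)) div 2) = nat ((d - c) div 2)" by simp
  then show ?thesis unfolding TI_def Q_shift_a[OF ab] J_shift[OF ab]
    by (simp add: sq_sign algebra_simps)
qed

lemma id_iii:
  assumes ab: "p0 * real b = real_of_int a" and y: "0 \<le> y" "y \<le> a"
    and nz: "TI (a-y) (a+y) x \<noteq> 0"
  shows "1 + CR (x + \<i> * of_int 0) a y = (1 + (-1)^(m*b) * T (nat (a - y)) x / T (nat y) (x + \<i> * of_int a))^2"
proof -
  define \<sigma> where "\<sigma> = ((-1::complex)^(m*b))"
  have ss: "\<sigma> * \<sigma> = 1" unfolding \<sigma>_def by (rule sq_sign)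
  have AB: "TI (-a-y) (y-a) x = TI (a-y) (a+y) x"
    using TI_shift[OF ab, of "a-y" "a+y" x] by (simp add: algebra_simps)
  have nz2: "TI (-a-y) (y-a) x \<noteq> 0" using AB nz by simp
  have o: "1 + CR (x + \<i> * of_int 0) a y = TI (y-a) (a+y) x * TI (-a-y) (a-y) x / (TI (a-y) (a+y) x * TI (-a-y) (y-a) x)"
    by (rule CR_onep_gen) (use y nz nz2 in auto)
  have k1: "T (nat (a - y)) x = TI (y-a) (a-y) x"
    using T_TI'[of "a-y" x 0] y by simp
  have k2: "T (nat y) (x + \<i> * of_int a) = TI (a-y) (a+y) x"
    using T_TI'[of "y" x a] y by simp
  obtain p q where pq: "a - y = int p" "y = int q" using y by (metis diff_ge_0_iff_ge nonneg_int_cases)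
  have a_eq: "a = int p + int q" using pq by simp
  have n1: "nat ((a + y - (y - a)) div 2) = p + q" by (simp add: a_eq pq)
  have n2: "nat ((a - y - (- a - y)) div 2) = q + p" by (simp add: a_eq pq)
  have n3: "nat ((a + y - (a - y)) div 2) = q" by (simp add: a_eq pq)
  have n4: "nat ((a - y - (y - a)) div 2) = p" by (simp add: a_eq pq)
  define XBC where "XBC = J x (y-a) p"
  define XCD where "XCD = J x (a-y) q"
  define QC where "QC = Q (x + \<i> * of_int (a-y))"
  define QD where "QD = Q (x + \<i> * of_int (a+y))"
  have QA: "Q (x + \<i> * of_int (-a-y)) = \<sigma> * QC"
    using Q_shift_a[OF ab, of x "a-y"] unfolding \<sigma>_def QC_def by (simp add: algebra_simps)
  have QB: "Q (x + \<i> * of_int (y-a)) = \<sigma> * QD"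
    using Q_shift_a[OF ab, of x "a+y"] unfolding \<sigma>_def QD_def by (simp add: algebra_simps)
  have XAB: "J x (-a-y) q = XCD"
    using J_shift[OF ab, of x "a-y" q] unfolding XCD_def by (simp add: algebra_simps)
  have TBD: "TI (y-a) (a+y) x = QD * (\<sigma> * QD) * (XBC + XCD)"
  proof -
    have "TI (y-a) (a+y) x = Q (x + \<i> * of_int (a+y)) * Q (x + \<i> * of_int (y-a)) * J x (y-a) (p+q)"
      unfolding TI_def n1 ..
    also have "J x (y-a) (p+q) = XBC + XCD"
      unfolding J_add XBC_def XCD_def using pq by (simp add: algebra_simps)
    finally show ?thesis unfolding QB QD_def .
  qed
  have TAC: "TI (-a-y) (a-y) x = QC * (\<sigma> * QC) * (XCD + XBC)"
  proof -
    have "TI (-a-y) (a-y) x = Q (x + \<i> * of_int (a-y)) * Q (x + \<i> * of_int (-a-y)) * J x (-a-y) (q+p)"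
      unfolding TI_def n2 ..
    also have "J x (-a-y) (q+p) = XCD + XBC"
      unfolding J_add XBC_def XAB[symmetric] using pq by (simp add: algebra_simps)
    finally show ?thesis unfolding QA QC_def .
  qed
  have TCD: "TI (a-y) (a+y) x = QD * QC * XCD"
    unfolding TI_def QC_def QD_def XCD_def n3 ..
  have TBC: "TI (y-a) (a-y) x = QC * (\<sigma> * QD) * XBC"
  proof -
    have "TI (y-a) (a-y) x = Q (x + \<i> * of_int (a-y)) * Q (x + \<i> * of_int (y-a)) * XBC"
      unfolding TI_def XBC_def n4 ..
    then show ?thesis unfolding QB QC_def .
  qed
  have key: "TI (y-a) (a+y) x * TI (-a-y) (a-y) x = (TI (a-y) (a+y) x + \<sigma> * TI (y-a) (a-y) x)^2"
    unfolding TBD TAC TCD TBC power2_eq_square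
    by (simp add: algebra_simps ss)
  show ?thesis unfolding o k1 k2 AB \<sigma>_def[symmetric] key using nz
    by (simp add: field_simps power2_eq_square)
qed


lemma id_iv:
  assumes ab: "p0 * real b = real_of_int a" and y: "0 \<le> y" "2*y \<le> a"
    and nz: "TI a (a+2*y) x \<noteq> 0" "TI (a-2*y) a x \<noteq> 0"
  shows "((-1)^(m*b) * T (nat (a - y)) (x + \<i> * of_int y) / T (nat y) (x + \<i> * of_int y + \<i> * of_int a))
       * ((-1)^(m*b) * T (nat (a - y)) (x + \<i> * of_int (-y)) / T (nat y) (x + \<i> * of_int (-y) + \<i> * of_int a))
       = 1 + CR (x + \<i> * of_int 0) (a - y) y"
proof -
  have sh: "TI (-a) (2*y-a) x = TI a (a+2*y) x"
    using TI_shift[OF ab, of a "a+2*y" x] by (simp add: algebra_simps)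
  have nz2: "TI (-a) (2*y-a) x \<noteq> 0" using sh nz by simp
  have o: "1 + CR (x + \<i> * of_int 0) (a - y) y = TI (2*y-a) a x * TI (-a) (a-2*y) x / (TI (a-2*y) a x * TI (-a) (2*y-a) x)"
    by (rule CR_onep_gen) (use y nz nz2 in auto)
  have e1: "T (nat (a - y)) (x + \<i> * of_int y) = TI (2*y-a) a x"
    using T_TI'[of "a-y" x y] y by (simp add: algebra_simps)
  have e2: "T (nat y) (x + \<i> * of_int y + \<i> * of_int a) = TI a (a+2*y) x"
  proof -
    have "x + \<i> * of_int y + \<i> * of_int a = x + \<i> * of_int (y + a)" by (simp add: algebra_simps)
    then show ?thesis using T_TI'[of "y" x "y+a"] y by (simp add: algebra_simps)
  qed
  have e3: "T (nat (a - y)) (x + \<i> * of_int (-y)) = TI (-a) (a-2*y) x"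
    using T_TI'[of "a-y" x "-y"] y by (simp add: algebra_simps)
  have e4: "T (nat y) (x + \<i> * of_int (-y) + \<i> * of_int a) = TI (a-2*y) a x"
  proof -
    have "x + \<i> * of_int (-y) + \<i> * of_int a = x + \<i> * of_int (a - y)" by (simp add: algebra_simps)
    then show ?thesis using T_TI'[of "y" x "a-y"] y by (simp add: algebra_simps)
  qed
  show ?thesis unfolding o e1 e2 e3 e4 sh using nz
    by (simp add: field_simps sq_sign)
qed

end

locale tsysB = tsys +
  assumes Npos: "N > 0" and Neven: "even N" and sin_th: "sin (pi / p0) \<noteq> 0"
    and bethe: "\<forall>j\<in>{1..m}.
        sinh (complex_of_real (pi / p0 / 2) * (\<omega> j - \<i> * (u + 2))) \<noteq> 0
      \<and> sinh (complex_of_real (pi / p0 / 2) * (\<omega> j + \<i> * u)) \<noteq> 0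
      \<and> Qf (pi / p0) m \<omega> (\<omega> j - 2 * \<i>) \<noteq> 0
      \<and> - (((sinh (complex_of_real (pi / p0 / 2) * (\<omega> j + \<i> * (u + 2)))
             * sinh (complex_of_real (pi / p0 / 2) * (\<omega> j - \<i> * u)))
          / (sinh (complex_of_real (pi / p0 / 2) * (\<omega> j - \<i> * (u + 2)))
             * sinh (complex_of_real (pi / p0 / 2) * (\<omega> j + \<i> * u)))) ^ (N div 2))
        = Qf (pi / p0) m \<omega> (\<omega> j + 2 * \<i>) / Qf (pi / p0) m \<omega> (\<omega> j - 2 * \<i>)"
begin

definition F where "F y = phif \<theta> N (y - \<i>*(u+2)) * phif \<theta> N (y + \<i>*u)"

lemma G_F: "G x = F x / (Q x * Q (x - 2*\<i>))"
  unfolding G_def F_def ..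

lemma Q_an: "f analytic_on UNIV \<Longrightarrow> (\<lambda>x. Q (f x)) analytic_on UNIV"
  unfolding Qf_def by (intro analytic_intros)

lemma phi_an: "f analytic_on UNIV \<Longrightarrow> (\<lambda>x. phif \<theta> N (f x)) analytic_on UNIV"
  unfolding phif_def using sin_th by (intro analytic_intros) auto

lemma F_an: "f analytic_on UNIV \<Longrightarrow> (\<lambda>x. F (f x)) analytic_on UNIV"
  unfolding F_def by (intro analytic_intros phi_an)

lemma Nhalf: "N div 2 > 0" using Npos Neven by auto

lemma phi_zero: "phif \<theta> N y = 0 \<longleftrightarrow> sinh (complex_of_real (\<theta>/2) * y) = 0"
  unfolding phif_def using sin_th Nhalf by simp

lemma Q_zero: "Q y = 0 \<longleftrightarrow> (\<exists>l\<in>{1..m}. sinh (complex_of_real (\<theta>/2) * (y - \<omega> l)) = 0)"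
  unfolding Qf_def by (simp add: prod_zero_iff)

lemma ev_sh: "\<forall>\<^sub>\<approx>x. sinh (complex_of_real (\<theta>/2) * (x + c)) \<noteq> 0"
proof -
  have "(\<lambda>x. sinh (complex_of_real (\<theta>/2) * (x + c))) analytic_on UNIV" by (intro analytic_intros)
  from entire_alt[OF this] show ?thesis
  proof
    assume "\<forall>x. sinh (complex_of_real (\<theta>/2) * (x + c)) = 0"
    then have "sinh (complex_of_real (\<theta>/2) * (\<i> * of_real p0 - c + c)) = 0" by blast
    moreover have "complex_of_real (\<theta>/2) * (\<i> * of_real p0 - c + c) = \<i> * of_real (pi/2)"
      using p0pos by (simp add: field_simps flip: of_real_mult) (simp add: of_real_mult)
    ultimately have "sinh (\<i> * complex_of_real (pi/2)) = 0" by metis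
    then show ?thesis unfolding sinh_i_real by simp
  qed
qed

lemma ev_Q: "\<forall>\<^sub>\<approx>x. Q (x + c) \<noteq> 0"
proof -
  have "\<forall>\<^sub>\<approx>x. \<forall>l\<in>{1..m}. sinh (complex_of_real (\<theta>/2) * (x + (c - \<omega> l))) \<noteq> 0"
    by (intro eventually_ball_finite ballI ev_sh) auto
  then show ?thesis
    by eventually_elim (auto simp: Q_zero algebra_simps)
qed

lemma ev_Qs: "finite A \<Longrightarrow> \<forall>\<^sub>\<approx>x. \<forall>c\<in>A. Q (x + c) \<noteq> 0"
  by (intro eventually_ball_finite ballI ev_Q)


lemma Q_iu2: "Q (\<i> * (u + 2)) \<noteq> 0"
proof
  assume "Q (\<i> * (u + 2)) = 0"
  then obtain l where l: "l \<in> {1..m}" "sinh (complex_of_real (\<theta>/2) * (\<i> * (u + 2) - \<omega> l)) = 0"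
    unfolding Q_zero by blast
  have "sinh (complex_of_real (pi / p0 / 2) * (\<omega> l - \<i> * (u + 2))) = - sinh (complex_of_real (\<theta>/2) * (\<i> * (u + 2) - \<omega> l))"
    by (simp flip: sinh_minus add: algebra_simps)
  with l bethe show False by auto
qed

lemma Q_iu: "Q (\<i> * u) \<noteq> 0"
proof
  assume "Q (\<i> * u) = 0"
  then obtain l where l: "l \<in> {1..m}" "sinh (complex_of_real (\<theta>/2) * (\<i> * u - \<omega> l)) = 0"
    unfolding Q_zero by blast
  define A where "A = complex_of_real (pi / p0 / 2) * (\<omega> l - \<i> * u)"
  have sA: "sinh A = 0"
  proof -
    have "A = - (complex_of_real (\<theta>/2) * (\<i> * u - \<omega> l))"
      unfolding A_def by (metis minus_diff_eq mult_minus_right)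
    then have "sinh A = - sinh (complex_of_real (\<theta>/2) * (\<i> * u - \<omega> l))" by simp
    with l show ?thesis by simp
  qed
  have b: "- (((sinh (complex_of_real (pi / p0 / 2) * (\<omega> l + \<i> * (u + 2)))
             * sinh A)
          / (sinh (complex_of_real (pi / p0 / 2) * (\<omega> l - \<i> * (u + 2)))
             * sinh (complex_of_real (pi / p0 / 2) * (\<omega> l + \<i> * u)))) ^ (N div 2))
        = Q (\<omega> l + 2 * \<i>) / Q (\<omega> l - 2 * \<i>)" and qn: "Q (\<omega> l - 2 * \<i>) \<noteq> 0"
    using bethe l(1) unfolding A_def by auto
  have "Q (\<omega> l + 2 * \<i>) / Q (\<omega> l - 2 * \<i>) = 0" unfolding b[symmetric] sA using Nhalf by simp
  with qn have "Q (\<omega> l + 2 * \<i>) = 0" by simp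
  then obtain l' where l': "l' \<in> {1..m}" "sinh (complex_of_real (\<theta>/2) * (\<omega> l + 2 * \<i> - \<omega> l')) = 0"
    unfolding Q_zero by blast
  have "complex_of_real (pi / p0 / 2) * (\<omega> l' - \<i> * (u + 2)) = A - complex_of_real (\<theta>/2) * (\<omega> l + 2 * \<i> - \<omega> l')"
  proof -
    have "\<And>c::complex. c * (\<omega> l' - \<i> * (u + 2)) = c * (\<omega> l - \<i> * u) - c * (\<omega> l + 2 * \<i> - \<omega> l')"
      by (simp add: algebra_simps)
    then show ?thesis unfolding A_def by blast
  qed
  then have "sinh (complex_of_real (pi / p0 / 2) * (\<omega> l' - \<i> * (u + 2))) = 0"
    using sA l'(2) by (simp add: sinh_diff)
  with l'(1) bethe show False by auto
qed

lemma PC: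
  assumes per: "\<forall>\<^sub>\<approx>x. G (x + D) = G x"
  shows "F (\<i> * (u + 2) - D) = 0"
proof -
  define f1 where "f1 x = F (x + D) * Q x * Q (x - 2*\<i>)" for x
  define f2 where "f2 x = F x * Q (x + D) * Q (x + D - 2*\<i>)" for x
  have a1: "f1 analytic_on UNIV" unfolding f1_def by (intro analytic_intros Q_an F_an)
  have a2: "f2 analytic_on UNIV" unfolding f2_def by (intro analytic_intros Q_an F_an)
  have "\<forall>\<^sub>\<approx>x. Q (x + 0) \<noteq> 0" "\<forall>\<^sub>\<approx>x. Q (x + (-2*\<i>)) \<noteq> 0" "\<forall>\<^sub>\<approx>x. Q (x + D) \<noteq> 0"
       "\<forall>\<^sub>\<approx>x. Q (x + (D - 2*\<i>)) \<noteq> 0"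
    by (rule ev_Q)+
  then have "\<forall>\<^sub>\<approx>x. f1 x = f2 x" using per
  proof eventually_elim
    case (elim x)
    have e1: "x + D - 2 * \<i> = x + (D - 2*\<i>)" "x - 2*\<i> = x + (-2*\<i>)" by (simp_all add: algebra_simps)
    have "x + D - 2 * \<i> = x + (D - 2*\<i>)" by simp
    from elim(5) have "F (x + D) / (Q (x + D) * Q (x + D - 2 * \<i>)) = F x / (Q x * Q (x - 2 * \<i>))"
      unfolding G_F by simp
    with elim(1-4) show ?case unfolding f1_def f2_def e1
      by (simp add: field_simps)
  qed
  from entire_eq[OF a1 a2 this] have "f1 (\<i> * (u + 2) - D) = f2 (\<i> * (u + 2) - D)" .
  moreover have "f1 (\<i> * (u + 2) - D) = 0"
    unfolding f1_def F_def by (simp add: phi_zero)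
  moreover have "\<i> * (u + 2) - D + D - 2 * \<i> = \<i> * u" by (simp add: algebra_simps)
  ultimately have "F (\<i> * (u + 2) - D) * Q (\<i> * (u + 2)) * Q (\<i> * u) = 0"
    unfolding f2_def by simp
  with Q_iu Q_iu2 show ?thesis by simp
qed


lemma sinh_th_ik: "sinh (complex_of_real (\<theta>/2) * (2 * \<i> * of_real t)) = \<i> * of_real (sin (\<theta> * t))"
proof -
  have "complex_of_real (\<theta>/2) * (2 * \<i> * of_real t) = \<i> * (of_real \<theta> * of_real t)"
    by (simp add: of_real_divide)
  also have "\<dots> = \<i> * of_real (\<theta> * t)" by (simp only: of_real_mult)
  finally have "complex_of_real (\<theta>/2) * (2 * \<i> * of_real t) = \<i> * of_real (\<theta> * t)" .
  then show ?thesis by (simp only: sinh_i_real)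
qed

lemma ND0:
  fixes k :: nat
  assumes hk: "sin (2 * \<theta> * real k) \<noteq> 0"
  shows "\<forall>\<^sub>\<approx>v. T k v \<noteq> 0"
proof -
  define X where "X v j = v + \<i> * (2 * of_nat j - of_nat k)" for v and j :: nat
  define R where "R v = (\<Prod>c\<in>{0..k}. Q (X v c))" for v
  define E where "E v = (\<Sum>j=1..k. F (X v j) * (\<Prod>c\<in>{0..k}-{j-1,j}. Q (X v c)))" for v
  define S where "S v = (\<Sum>j=1..k. G (X v j))" for v
  have TS: "T k v = Q (v + \<i> * of_nat k) * Q (v - \<i> * of_nat k) * S v" for v
    unfolding T_alt S_def X_def ..
  have ES: "E v = R v * S v" if Rv: "R v \<noteq> 0" for v
  proof -
    have "R v * S v = (\<Sum>j=1..k. G (X v j) * R v)" unfolding S_def sum_distrib_left by (simp add: mult.commute)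
    also have "\<dots> = (\<Sum>j=1..k. F (X v j) * (\<Prod>c\<in>{0..k}-{j-1,j}. Q (X v c)))"
    proof (rule sum.cong[OF refl])
      fix j assume j: "j \<in> {1..k}"
      have "R v = Q (X v j) * (\<Prod>c\<in>{0..k}-{j}. Q (X v c))"
        unfolding R_def using j by (intro prod.remove) auto
      also have "(\<Prod>c\<in>{0..k}-{j}. Q (X v c)) = Q (X v (j-1)) * (\<Prod>c\<in>({0..k}-{j})-{j-1}. Q (X v c))"
        using j by (intro prod.remove) auto
      also have "({0..k}-{j})-{j-1} = {0..k}-{j-1,j}" by auto
      also have "X v (j-1) = X v j - 2*\<i>" unfolding X_def using j by (simp add: of_nat_diff algebra_simps)
      finally have Rj: "R v = Q (X v j) * (Q (X v j - 2*\<i>) * (\<Prod>c\<in>{0..k}-{j-1,j}. Q (X v c)))" .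
      with Rv have "Q (X v j) \<noteq> 0" "Q (X v j - 2*\<i>) \<noteq> 0" by auto
      then show "G (X v j) * R v = F (X v j) * (\<Prod>c\<in>{0..k}-{j-1,j}. Q (X v c))"
        unfolding Rj G_F by (simp add: field_simps)
    qed
    finally show ?thesis unfolding E_def by simp
  qed
  have Rev: "\<forall>\<^sub>\<approx>v. R v \<noteq> 0"
  proof -
    have "\<forall>\<^sub>\<approx>v. \<forall>c\<in>{0..k}. Q (v + \<i> * (2 * of_nat c - of_nat k)) \<noteq> 0"
      by (intro eventually_ball_finite ballI ev_Q) auto
    then show ?thesis by eventually_elim (auto simp: R_def X_def prod_zero_iff)
  qed
  have Ean: "E analytic_on UNIV"
    unfolding E_def[abs_def] X_def by (intro analytic_intros F_an Q_an)
  from entire_alt[OF Ean] show ?thesis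
  proof
    assume "\<forall>\<^sub>\<approx>v. E v \<noteq> 0"
    moreover note Rev
    moreover have "\<forall>\<^sub>\<approx>v. Q (v + \<i> * of_nat k) \<noteq> 0" by (rule ev_Q)
    moreover have "\<forall>\<^sub>\<approx>v. Q (v + (- \<i> * of_nat k)) \<noteq> 0" by (rule ev_Q)
    ultimately show ?thesis
    proof eventually_elim
      case (elim v)
      then have "S v \<noteq> 0" using ES[of v] by auto
      with elim show ?case unfolding TS by simp
    qed
  next
    assume E0: "\<forall>v. E v = 0"
    have S0: "\<forall>\<^sub>\<approx>v. S v = 0" using Rev by eventually_elim (use ES E0 in auto)
    have S02: "\<forall>\<^sub>\<approx>v. S (v + 2*\<i>) = 0" using ev_translate[OF S0] .
    have tel: "S (v + 2*\<i>) - S v = G (X v (Suc k)) - G (X v 1)" for v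
    proof -
      have "S (v + 2*\<i>) = (\<Sum>j=1..k. G (X v (Suc j)))"
        unfolding S_def X_def by (intro sum.cong refl arg_cong[where f=G]) (simp add: algebra_simps)
      then have "S (v + 2*\<i>) - S v = (\<Sum>j=1..k. G (X v (Suc j)) - G (X v j))"
        unfolding S_def by (simp add: sum_subtractf)
      also have "\<dots> = G (X v (Suc k)) - G (X v 1)" by (rule sum_Suc_diff) simp
      finally show ?thesis .
    qed
    have P0: "\<forall>\<^sub>\<approx>v. G (X v (Suc k)) = G (X v 1)"
      using S0 S02 by eventually_elim (use tel in \<open>metis eq_iff_diff_eq_0\<close>)
    have per1: "\<forall>\<^sub>\<approx>x. G (x + 2*\<i>* of_nat k) = G x"
    proof -
      have "\<forall>\<^sub>\<approx>x. G (X (x + (- \<i> * (2 - of_nat k))) (Suc k)) = G (X (x + (- \<i> * (2 - of_nat k))) 1)"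
        using ev_translate[OF P0] .
      moreover have "X (x + (- \<i> * (2 - of_nat k))) (Suc k) = x + 2*\<i>* of_nat k" for x
        unfolding X_def by (simp add: algebra_simps)
      moreover have "X (x + (- \<i> * (2 - of_nat k))) 1 = x" for x
        unfolding X_def by (simp add: algebra_simps)
      ultimately show ?thesis by simp
    qed
    have per2: "\<forall>\<^sub>\<approx>x. G (x + 4*\<i>* of_nat k) = G x"
      using per1 ev_translate[OF per1, of "2*\<i>* of_nat k"]
    proof eventually_elim
      case (elim x)
      have "x + 2 * \<i> * of_nat k + 2 * \<i> * of_nat k = x + 4*\<i>* of_nat k" by (simp add: algebra_simps)
      with elim show ?case by simp
    qed
    have f1: "F (\<i> * (u + 2) - 2*\<i>* of_nat k) = 0" by (rule PC[OF per1])
    have f2: "F (\<i> * (u + 2) - 4*\<i>* of_nat k) = 0" by (rule PC[OF per2])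
    have "sin (2 * \<theta> * real k) = 2 * sin (\<theta> * real k) * cos (\<theta> * real k)"
      using sin_double[of "\<theta> * real k"] by (simp add: mult.assoc)
    then have sk: "sin (\<theta> * real k) \<noteq> 0" using hk by auto
    have nz1: "phif \<theta> N (\<i> * (u + 2) - 2*\<i>* of_nat k - \<i>*(u+2)) \<noteq> 0"
    proof -
      have "\<i> * (u + 2) - 2*\<i>* of_nat k - \<i>*(u+2) = - (2 * \<i> * of_real (real k))" by simp
      then show ?thesis unfolding phi_zero using sk by (simp only: mult_minus_right sinh_minus sinh_th_ik) simp
    qed
    have nz2: "phif \<theta> N (\<i> * (u + 2) - 4*\<i>* of_nat k - \<i>*(u+2)) \<noteq> 0"
    proof -
      have "\<i> * (u + 2) - 4*\<i>* of_nat k - \<i>*(u+2) = - (2 * \<i> * of_real (2 * real k))" by simp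
      then show ?thesis unfolding phi_zero using hk by (simp only: mult_minus_right sinh_minus sinh_th_ik) (simp add: mult_ac)
    qed
    define A1 where "A1 = complex_of_real (\<theta>/2) * (\<i> * (u + 2) - 2*\<i>* of_nat k + \<i>*u)"
    define A2 where "A2 = complex_of_real (\<theta>/2) * (\<i> * (u + 2) - 4*\<i>* of_nat k + \<i>*u)"
    have "phif \<theta> N (\<i> * (u + 2) - 2*\<i>* of_nat k + \<i>*u) = 0"
      using f1 nz1 unfolding F_def by (simp only: mult_eq_0_iff) blast
    then have s1: "sinh A1 = 0" unfolding A1_def phi_zero .
    have "phif \<theta> N (\<i> * (u + 2) - 4*\<i>* of_nat k + \<i>*u) = 0"
      using f2 nz2 unfolding F_def by (simp only: mult_eq_0_iff) blast
    then have s2: "sinh A2 = 0" unfolding A2_def phi_zero .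
    have "A1 - A2 = complex_of_real (\<theta>/2) * (2 * \<i> * of_real (real k))"
    proof -
      have "\<And>c::complex. c * (\<i> * (u + 2) - 2*\<i>* of_nat k + \<i>*u) - c * (\<i> * (u + 2) - 4*\<i>* of_nat k + \<i>*u) = c * (2 * \<i> * of_real (real k))"
        by (simp add: algebra_simps)
      then show ?thesis unfolding A1_def A2_def by blast
    qed
    then have "sinh (complex_of_real (\<theta>/2) * (2 * \<i> * of_real (real k))) = 0"
      using s1 s2 by (metis sinh_diff mult_zero_left mult_zero_right diff_zero)
    then show ?thesis unfolding sinh_th_ik using sk by simp
  qed
qed

lemma ND:
  fixes k :: nat
  assumes hk: "sin (2 * \<theta> * real k) \<noteq> 0"
  shows "\<forall>\<^sub>\<approx>v. T k (v + c) \<noteq> 0"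
  using ev_translate[OF ND0[OF hk]] .

end

locale main = tsysB p0 N m u \<omega> + cfl2 \<nu> \<alpha> p0 for p0 N m u \<omega> \<nu> \<alpha>
begin

abbreviation "Y \<equiv> Yf \<nu> \<alpha> p0 N m u \<omega>"

lemma T0: "T 0 x = 0" unfolding Tf_def by simp

lemma CR_form: "T (nat (nt + k - 1 + 1)) (v + s) * T (nat (nt - k - 1 + 1)) (v + s)
        / (T (nat (k - 1 + 1)) (v + \<i> * of_int nt + s) * T (nat (k - 1 + 1)) (v - \<i> * of_int nt + s)) = CR (v + s) nt k"
proof -
  have a: "v + \<i> * of_int nt + s = v + s + \<i> * of_int nt" by (simp add: add_ac)
  have b: "v - \<i> * of_int nt + s = v + s - \<i> * of_int nt" by (simp add: algebra_simps)
  show ?thesis unfolding CR_def a b by simp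
qed

lemma Yblock:
  assumes q: "q < \<alpha>" "M q \<le> j" "j < M (Suc q)"
  shows "Y j v = CR (v + \<i> * of_int (z q + (j - M q) * z (Suc q) - 1) * of_real p0) (y q + (j + 1 - M q) * y (Suc q)) (y (Suc q))"
proof (cases "j = 0")
  case True
  have "q = 0"
  proof (rule ccontr)
    assume "q \<noteq> 0"
    then have "M 0 < M q" using q by (intro M_mono_strict) auto
    then show False using q True by (simp add: msum_def)
  qed
  then have "y q + (j + 1 - M q) * y (Suc q) - y (Suc q) = 0" using True by (simp add: msum_def)
  then show ?thesis using True unfolding CR_def by (simp add: T0 Yf_def)
next
  case False
  have j1: "M q < j + 1" "j + 1 \<le> M (Suc q)" using q by auto
  have e1: "v + \<i> * of_int (y q + (j + 1 - M q) * y (Suc q)) + \<i> * of_int (z q + (j - M q) * z (Suc q) - 1) * of_real p0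
      = v + \<i> * of_int (z q + (j - M q) * z (Suc q) - 1) * of_real p0 + \<i> * of_int (y q + (j + 1 - M q) * y (Suc q))"
    by (simp add: algebra_simps)
  have e2: "v - \<i> * of_int (y q + (j + 1 - M q) * y (Suc q)) + \<i> * of_int (z q + (j - M q) * z (Suc q) - 1) * of_real p0
      = v + \<i> * of_int (z q + (j - M q) * z (Suc q) - 1) * of_real p0 - \<i> * of_int (y q + (j + 1 - M q) * y (Suc q))"
    by (simp add: algebra_simps)
  show ?thesis using False unfolding Yf_def Let_def rw_eq[OF q] ntil_eq[OF q(1) j1] wcf_eq[OF q] ycf_nat
    by (simp only: CR_form if_False)
qed

lemma CR_per: "CR (x + of_int t * P2) n k = CR x n k"
proof -
  have a: "x + of_int t * P2 + \<i> * of_int n = (x + \<i> * of_int n) + of_int t * P2" by (simp add: algebra_simps)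
  have b: "x + of_int t * P2 - \<i> * of_int n = (x - \<i> * of_int n) + of_int t * P2" by (simp add: algebra_simps)
  show ?thesis unfolding CR_def a b T_shift_int ..
qed

lemma rebase:
  assumes "w + sz = W + 2*t"
  shows "CR (v + \<i> * of_real (of_int sz * p0 - of_int sy) + \<i> * of_int w * of_real p0) n k
       = CR (v + \<i> * of_int W * of_real p0 + \<i> * of_int (-sy)) n k"
proof -
  have "complex_of_int w + of_int sz = of_int W + 2 * of_int t"
  proof -
    have "complex_of_int (w + sz) = complex_of_int (W + 2*t)" using assms by simp
    then show ?thesis by simp
  qed
  then have "v + \<i> * of_real (of_int sz * p0 - of_int sy) + \<i> * of_int w * of_real p0
      = (v + \<i> * of_int W * of_real p0 + \<i> * of_int (-sy)) + of_int t * P2"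
  proof -
    have "v + \<i> * of_real (of_int sz * p0 - of_int sy) + \<i> * of_int w * of_real p0
        = v + \<i> * of_real p0 * (of_int w + of_int sz) - \<i> * of_int sy"
      by (simp add: algebra_simps)
    also have "\<dots> = v + \<i> * of_real p0 * (of_int W + 2 * of_int t) - \<i> * of_int sy"
      unfolding \<open>complex_of_int w + of_int sz = of_int W + 2 * of_int t\<close> ..
    also have "\<dots> = (v + \<i> * of_int W * of_real p0 + \<i> * of_int (-sy)) + of_int t * P2"
      by (simp add: algebra_simps)
    finally show ?thesis .
  qed
  then show ?thesis by (simp only: CR_per)
qed

lemma pseq_int: "pseq \<nu> p0 r = of_int ((-1)^r * z r) * p0 - of_int ((-1)^r * y r)"
  unfolding pseq_formula by (simp add: algebra_simps)

lemma TI_ev: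
  assumes "1 \<le> r" "r \<le> \<alpha>" "b - a = 2 * y r"
  shows "\<forall>\<^sub>\<approx>v. TI a b (v + c) \<noteq> 0"
proof -
  have y0: "0 \<le> y r" by (rule yy_nonneg)
  have "\<forall>\<^sub>\<approx>v. T (nat (y r)) (v + (c + \<i> * of_int (a + y r))) \<noteq> 0"
    by (rule ND) (rule sin_nz[OF assms(1,2)])
  moreover have "T (nat (y r)) (v + (c + \<i> * of_int (a + y r))) = TI a b (v + c)" for v
  proof -
    have "T (nat (y r)) (v + c + \<i> * of_int (a + y r)) = TI (a + y r - y r) (a + y r + y r) (v + c)"
      using T_TI'[OF y0] by blast
    moreover have "a + y r + y r = b" using assms by simp
    ultimately show ?thesis by (simp add: add.assoc)
  qed
  ultimately show ?thesis by simp
qed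


abbreviation "oY \<equiv> onepY \<nu> \<alpha> p0 N m u \<omega>"

lemma sigma_cases: "((-1::int)^r = 1) \<or> ((-1::int)^r = -1)"
  by (cases "even r") auto

lemma pr_plus: "v + \<i> * of_real (pseq \<nu> p0 r) = v + \<i> * of_real (of_int ((-1)^r * z r) * p0 - of_int ((-1)^r * y r))"
  unfolding pseq_int ..

lemma pr_minus: "v - \<i> * of_real (pseq \<nu> p0 r) = v + \<i> * of_real (of_int (- ((-1)^r * z r)) * p0 - of_int (- ((-1)^r * y r)))"
  unfolding pseq_int by (simp add: algebra_simps)

lemma no_shift: "v = v + \<i> * of_real (of_int 0 * p0 - of_int 0)" by simp

lemma x0: "x + \<i> * of_int 0 = x" by simp

lemma part_i:
  assumes r: "r \<in> {1..\<alpha>}" and j: "M (r-1) \<le> j" "j \<le> M r - 2"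
  shows "\<forall>\<^sub>\<approx>v. Y j (v + \<i> * of_real (pseq \<nu> p0 r)) * Y j (v - \<i> * of_real (pseq \<nu> p0 r))
            = oY (j - 1) (if j = M (r-1) then -1 else 1) v * (1 + Y (j + 1) v)"
proof -
  obtain q where rq: "r = Suc q" using r by (cases r) auto
  have q: "q < \<alpha>" using r rq by auto
  have jq: "M q \<le> j" "j < M (Suc q)" "j + 1 < M (Suc q)" using j rq by auto
  define \<sigma> where "\<sigma> = (-1::int)^r"
  have \<sigma>: "\<sigma> = 1 \<or> \<sigma> = -1" unfolding \<sigma>_def by (rule sigma_cases)
  define k where "k = y (Suc q)"
  define w0 where "w0 = z q + (j - M q) * z (Suc q) - 1"
  define n where "n = y q + (j + 1 - M q) * y (Suc q)"
  define W where "W = w0 + z (Suc q)"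
  have k0: "0 \<le> k" unfolding k_def by (rule yy_nonneg)
  have kn: "k \<le> n"
  proof -
    have "1 * k \<le> (j + 1 - M q) * k" by (rule mult_right_mono) (use jq k0 in auto)
    then show ?thesis unfolding n_def k_def using yy_nonneg[of \<nu> q] by simp
  qed
  have Yp: "Y j (v + \<i> * of_real (pseq \<nu> p0 r)) = CR (v + \<i> * of_int W * of_real p0 + \<i> * of_int (-(\<sigma> * k))) n k" for v
  proof -
    have "Y j (v + \<i> * of_real (pseq \<nu> p0 r)) = CR (v + \<i> * of_real (of_int (\<sigma> * z r) * p0 - of_int (\<sigma> * y r)) + \<i> * of_int w0 * of_real p0) n k"
      unfolding Yblock[OF q jq(1,2)] pr_plus \<sigma>_def w0_def n_def k_def ..
    also have "\<dots> = CR (v + \<i> * of_int W * of_real p0 + \<i> * of_int (-(\<sigma> * y r))) n k"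
      by (rule rebase[where t="if \<sigma> = 1 then 0 else - z r"]) (use \<sigma> rq in \<open>auto simp: W_def\<close>)
    finally show ?thesis using rq k_def by simp
  qed
  have Ym: "Y j (v - \<i> * of_real (pseq \<nu> p0 r)) = CR (v + \<i> * of_int W * of_real p0 + \<i> * of_int (\<sigma> * k)) n k" for v
  proof -
    have "Y j (v - \<i> * of_real (pseq \<nu> p0 r)) = CR (v + \<i> * of_real (of_int (-(\<sigma> * z r)) * p0 - of_int (-(\<sigma> * y r))) + \<i> * of_int w0 * of_real p0) n k"
      unfolding Yblock[OF q jq(1,2)] pr_minus \<sigma>_def w0_def n_def k_def ..
    also have "\<dots> = CR (v + \<i> * of_int W * of_real p0 + \<i> * of_int (-(-(\<sigma> * y r)))) n k"
      by (rule rebase[where t="if \<sigma> = 1 then - z r else 0"]) (use \<sigma> rq in \<open>auto simp: W_def\<close>)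
    finally show ?thesis using rq k_def by simp
  qed
  have Y1: "Y (j + 1) v = CR (v + \<i> * of_int W * of_real p0 + \<i> * of_int 0) (n + k) k" for v
  proof -
    have jq1: "M q \<le> j + 1" using jq by simp
    have "Y (j + 1) v = CR (v + \<i> * of_real (of_int 0 * p0 - of_int 0) + \<i> * of_int (z q + (j + 1 - M q) * z (Suc q) - 1) * of_real p0) (y q + (j + 1 + 1 - M q) * y (Suc q)) (y (Suc q))"
      by (subst no_shift) (rule Yblock[OF q jq1 jq(3)])
    also have "\<dots> = CR (v + \<i> * of_int W * of_real p0 + \<i> * of_int (-0)) (y q + (j + 1 + 1 - M q) * y (Suc q)) (y (Suc q))"
      by (rule rebase[where t=0]) (simp add: W_def w0_def algebra_simps)
    finally show ?thesis unfolding n_def k_def by (simp add: algebra_simps)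
  qed
  show ?thesis
  proof (cases "j = 0")
    case True
    then show ?thesis by (simp add: Yf_def onepY_def)
  next
    case False
    show ?thesis
    proof (cases "j = M (r-1)")
      case False
      then have jg: "M q < j" using jq rq by simp
      have jq2: "M q \<le> j - 1" "j - 1 < M (Suc q)" using jg jq by auto
      have k2n: "2 * k \<le> n"
      proof -
        have "2 * k \<le> (j + 1 - M q) * k" by (rule mult_right_mono) (use jg k0 in auto)
        then show ?thesis unfolding n_def k_def using yy_nonneg[of \<nu> q] by simp
      qed
      have Ym1: "Y (j - 1) v = CR (v + \<i> * of_int W * of_real p0 + \<i> * of_int 0) (n - k) k" for v
      proof -
        have "Y (j - 1) v = CR (v + \<i> * of_real (of_int 0 * p0 - of_int 0) + \<i> * of_int (z q + (j - 1 - M q) * z (Suc q) - 1) * of_real p0) (y q + (j - 1 + 1 - M q) * y (Suc q)) (y (Suc q))"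
          by (subst no_shift) (rule Yblock[OF q jq2])
        also have "\<dots> = CR (v + \<i> * of_int W * of_real p0 + \<i> * of_int (-0)) (y q + (j - 1 + 1 - M q) * y (Suc q)) (y (Suc q))"
          by (rule rebase[where t="- z (Suc q)"]) (simp add: W_def w0_def algebra_simps)
        finally show ?thesis unfolding n_def k_def by (simp add: algebra_simps)
      qed
      have ev: "\<forall>\<^sub>\<approx>v. TI (n-2*k) n (v + \<i> * of_int W * of_real p0) \<noteq> 0 \<and> TI (-n-2*k) (-n) (v + \<i> * of_int W * of_real p0) \<noteq> 0
          \<and> TI n (n+2*k) (v + \<i> * of_int W * of_real p0) \<noteq> 0 \<and> TI (-n) (2*k-n) (v + \<i> * of_int W * of_real p0) \<noteq> 0"
        by (intro eventually_conj TI_ev[of r]) (use r rq k_def in auto)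
      then show ?thesis
      proof eventually_elim
        case (elim v)
        define x where "x = v + \<i> * of_int W * of_real p0"
        have I: "CR (x + \<i> * of_int (-k)) n k * CR (x + \<i> * of_int k) n k
           = (1 + CR (x + \<i> * of_int 0) (n-k) k) * (1 + CR (x + \<i> * of_int 0) (n+k) k)"
          by (rule id_i_gen) (use k0 k2n elim in \<open>auto simp: x_def\<close>)
        have o: "oY (j - 1) (if j = M (r-1) then -1 else 1) v = 1 + Y (j - 1) v"
          using False \<open>j \<noteq> 0\<close> by (simp add: onepY_def)
        show ?case unfolding o Yp Ym Y1 Ym1 x_def[symmetric]
          using I \<sigma> by (auto simp: mult.commute)
      qed
    next
      case True
      then have jM: "j = M q" using rq by simp
      have q1: "q \<ge> 1" using \<open>j \<noteq> 0\<close> jM by (cases q) (auto simp: msum_def)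
      obtain q' where q': "q = Suc q'" using q1 by (cases q) auto
      define kp where "kp = y q"
      have kp0: "0 \<le> kp" unfolding kp_def by (rule yy_nonneg)
      have kpk: "kp \<le> k" unfolding kp_def k_def using q by (intro y_mono) auto
      have jq2: "M q' \<le> j - 1" "j - 1 < M (Suc q')" using jM q' M_mono_strict[of q' q] q by auto
      have nuq: "M q - M q' = int (\<nu> q)" using q' msum_Suc by simp
      have yrec: "y (Suc q) = y q' + int (\<nu> q) * y q" using q' by simp
      have zrec: "z (Suc q) = z q' + int (\<nu> q) * z q" using q' by simp
      have nkk: "n = k + kp" unfolding n_def k_def kp_def jM by simp
      have Ym1: "Y (j - 1) v = CR (v + \<i> * of_int W * of_real p0 + \<i> * of_int 0) k kp" for v
      proof -
        have "Y (j - 1) v = CR (v + \<i> * of_real (of_int 0 * p0 - of_int 0) + \<i> * of_int (z q' + (j - 1 - M q') * z (Suc q') - 1) * of_real p0) (y q' + (j - 1 + 1 - M q') * y (Suc q')) (y (Suc q'))"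
          by (subst no_shift, rule Yblock[OF _ jq2]) (use q q' in simp)
        also have "\<dots> = CR (v + \<i> * of_int W * of_real p0 + \<i> * of_int (-0)) (y q' + (j - 1 + 1 - M q') * y (Suc q')) (y (Suc q'))"
          by (rule rebase[where t="- z q"]) (use jM nuq zrec q' in \<open>simp add: W_def w0_def algebra_simps\<close>)
        finally show ?thesis unfolding k_def kp_def using jM nuq yrec q' by (simp add: algebra_simps)
      qed
      have ev: "\<forall>\<^sub>\<approx>v. TI (-3*k-kp) (-k-kp) (v + \<i> * of_int W * of_real p0) \<noteq> 0 \<and> TI (-k+kp) (k+kp) (v + \<i> * of_int W * of_real p0) \<noteq> 0
           \<and> TI (-k-kp) (-k+kp) (v + \<i> * of_int W * of_real p0) \<noteq> 0 \<and> TI (-k-kp) (k-kp) (v + \<i> * of_int W * of_real p0) \<noteq> 0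
           \<and> TI (k+kp) (3*k+kp) (v + \<i> * of_int W * of_real p0) \<noteq> 0 \<and> TI (k-kp) (k+kp) (v + \<i> * of_int W * of_real p0) \<noteq> 0"
        by (intro eventually_conj TI_ev[of r] TI_ev[of q]) (use r rq k_def kp_def q1 q in auto)
      then show ?thesis
      proof eventually_elim
        case (elim v)
        define x where "x = v + \<i> * of_int W * of_real p0"
        have I: "CR (x + \<i> * of_int (-k)) (k+kp) (k) * CR (x + \<i> * of_int (k)) (k+kp) (k)
           = inverse (1 + CR (x + \<i> * of_int 0) (k) (kp)) * (1 + CR (x + \<i> * of_int 0) (2*k+kp) (k))"
          by (rule id_i_t0) (use kp0 kpk elim in \<open>auto simp: x_def\<close>)
        have o: "oY (j - 1) (if j = M (r-1) then -1 else 1) v = inverse (1 + Y (j - 1) v)"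
          using True \<open>j \<noteq> 0\<close> by (simp add: onepY_def power_int_minus)
        have nk2: "n + k = 2*k + kp" using nkk by simp
        show ?case unfolding o Yp Ym Y1 Ym1 x_def[symmetric] nkk nk2
          using I \<sigma> by (auto simp: mult.commute)
      qed
    qed
  qed
qed


lemma neg_diff_comm: "- a - b = - b - (a::complex)" by simp

lemma rebase':
  assumes "even (w + sz - W)"
  shows "CR (v + \<i> * of_real (of_int sz * p0 - of_int sy) + \<i> * of_int w * of_real p0) n k
       = CR (v + \<i> * of_int W * of_real p0 + \<i> * of_int (-sy)) n k"
  by (rule rebase[where t="(w + sz - W) div 2"]) (use assms in auto)

lemma TI_ev3:
  assumes "r1 \<in> {1..\<alpha>}" "r2 \<in> {1..\<alpha>}" "r3 \<in> {1..\<alpha>}" "b - a = 2 * y r1 \<or> b - a = 2 * y r2 \<or> b - a = 2 * y r3"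
  shows "\<forall>\<^sub>\<approx>v. TI a b (v + c) \<noteq> 0"
  using assms TI_ev[of r1 b a c] TI_ev[of r2 b a c] TI_ev[of r3 b a c] by auto

lemma part_ii_aux:
  assumes r: "r \<in> {1..\<alpha> - 1}" and jdef: "j = M r - 1"
    and pr: "pr = \<i> * of_real (pseq \<nu> p0 r)" and pr1: "pr1 = \<i> * of_real (pseq \<nu> p0 (Suc r))"
    and e: "e = (if \<nu> r = 1 then -1 else 1 :: int)"
  shows "\<forall>\<^sub>\<approx>v. Y j (v + pr + pr1) * Y j (v + pr - pr1) * Y j (v - pr + pr1) * Y j (v - pr - pr1)
        = (oY (j - 1) e (v + pr1) * oY (j - 1) e (v - pr1))
        * (1 + Y (j + 1) (v + pr)) * (1 + Y (j + 1) (v - pr))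
        * (1 + Y j (v + pr - pr1)) * (1 + Y j (v - pr + pr1))"
proof -
  obtain q where rq: "r = Suc q" using r by (cases r) auto
  have q: "q < \<alpha>" and r\<alpha>: "Suc r \<le> \<alpha>" using r rq by auto
  have nur: "\<nu> r \<ge> 1" using r nu_pos by auto
  have Mr: "M r = M q + int (\<nu> r)" using rq msum_Suc by simp
  have jq: "M q \<le> j" "j < M (Suc q)" using jdef Mr nur rq by auto
  have jr: "M r \<le> j + 1" "j + 1 < M (Suc r)" using jdef M_mono_strict[of r "Suc r"] r\<alpha> by auto
  define \<sigma> where "\<sigma> = (-1::int)^r"
  have \<sigma>: "\<sigma> = 1 \<or> \<sigma> = -1" unfolding \<sigma>_def by (rule sigma_cases)
  have \<sigma>1: "(-1::int)^(Suc r) = - \<sigma>" unfolding \<sigma>_def by simp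
  define k where "k = y r"
  define n where "n = y (Suc r)"
  define w0 where "w0 = z q + (j - M q) * z (Suc q) - 1"
  define W where "W = w0 + z r + z (Suc r)"
  have k0: "0 \<le> k" unfolding k_def by (rule yy_nonneg)
  have nrec: "n = y q + int (\<nu> r) * k" unfolding n_def k_def rq by simp
  have zrec: "z (Suc r) = z q + int (\<nu> r) * z r" unfolding rq by simp
  have jt: "j - M q = int (\<nu> r) - 1" using jdef Mr by simp
  have ps: "pseq \<nu> p0 r = of_int (\<sigma> * z r) * p0 - of_int (\<sigma> * k)"
    unfolding pseq_int \<sigma>_def k_def ..
  have ps1: "pseq \<nu> p0 (Suc r) = of_int (- \<sigma> * z (Suc r)) * p0 - of_int (- \<sigma> * n)"
    unfolding pseq_int \<sigma>1 n_def ..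
  have sh: "v + pr + pr1 = v + \<i> * of_real (of_int (\<sigma> * z r - \<sigma> * z (Suc r)) * p0 - of_int (\<sigma> * k - \<sigma> * n))"
           "v + pr - pr1 = v + \<i> * of_real (of_int (\<sigma> * z r + \<sigma> * z (Suc r)) * p0 - of_int (\<sigma> * k + \<sigma> * n))"
           "v - pr + pr1 = v + \<i> * of_real (of_int (- \<sigma> * z r - \<sigma> * z (Suc r)) * p0 - of_int (- \<sigma> * k - \<sigma> * n))"
           "v - pr - pr1 = v + \<i> * of_real (of_int (- \<sigma> * z r + \<sigma> * z (Suc r)) * p0 - of_int (- \<sigma> * k + \<sigma> * n))"
           "v + pr = v + \<i> * of_real (of_int (\<sigma> * z r) * p0 - of_int (\<sigma> * k))"
           "v - pr = v + \<i> * of_real (of_int (- \<sigma> * z r) * p0 - of_int (- \<sigma> * k))"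
           "v + pr1 = v + \<i> * of_real (of_int (- \<sigma> * z (Suc r)) * p0 - of_int (- \<sigma> * n))"
           "v - pr1 = v + \<i> * of_real (of_int (\<sigma> * z (Suc r)) * p0 - of_int (\<sigma> * n))" for v
    unfolding pr pr1 ps ps1 by (simp_all add: algebra_simps)
  have nj: "y q + (j + 1 - M q) * y (Suc q) = n"
  proof -
    have "j + 1 - M q = int (\<nu> r)" using jt by simp
    then show ?thesis by (simp add: nrec k_def rq mult.commute)
  qed
  have YJ: "Y j (v + \<i> * of_real (of_int sz * p0 - of_int sy)) = CR (v + \<i> * of_int W * of_real p0 + \<i> * of_int (-sy)) n k"
    if "even (w0 + sz - W)" for v sz sy
  proof -
    have "Y j (v + \<i> * of_real (of_int sz * p0 - of_int sy)) = CR (v + \<i> * of_real (of_int sz * p0 - of_int sy) + \<i> * of_int w0 * of_real p0) n k"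
      using Yblock[OF q jq, of "v + \<i> * of_real (of_int sz * p0 - of_int sy)"] unfolding w0_def[symmetric] nj by (simp add: k_def rq)
    also have "\<dots> = CR (v + \<i> * of_int W * of_real p0 + \<i> * of_int (-sy)) n k"
      by (rule rebase') (rule that)
    finally show ?thesis .
  qed
  have YJ1: "Y (j + 1) (v + \<i> * of_real (of_int sz * p0 - of_int sy)) = CR (v + \<i> * of_int W * of_real p0 + \<i> * of_int (-sy)) (k + n) n"
    if "even (z r - 1 + sz - W)" for v sz sy
  proof -
    have "Y (j + 1) (v + \<i> * of_real (of_int sz * p0 - of_int sy)) = CR (v + \<i> * of_real (of_int sz * p0 - of_int sy) + \<i> * of_int (z r - 1) * of_real p0) (k + n) n"
    proof -
      have rl: "r < \<alpha>" using r\<alpha> by simp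
      have a: "j + 1 - M r = 0" "j + 1 + 1 - M r = 1" using jdef by simp_all
      show ?thesis using Yblock[OF rl jr, of "v + \<i> * of_real (of_int sz * p0 - of_int sy)"] unfolding a
        by (simp add: k_def n_def)
    qed
    also have "\<dots> = CR (v + \<i> * of_int W * of_real p0 + \<i> * of_int (-sy)) (k + n) n"
      by (rule rebase') (rule that)
    finally show ?thesis .
  qed
  have zw: "z (Suc r) = w0 + z r + 1" unfolding w0_def jt zrec rq by (simp add: algebra_simps)
  have evenW: "even (w0 + (\<sigma> * z r - \<sigma> * z (Suc r)) - W)" "even (w0 + (\<sigma> * z r + \<sigma> * z (Suc r)) - W)"
     "even (w0 + (- \<sigma> * z r - \<sigma> * z (Suc r)) - W)" "even (w0 + (- \<sigma> * z r + \<sigma> * z (Suc r)) - W)"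
     "even (z r - 1 + \<sigma> * z r - W)" "even (z r - 1 + - \<sigma> * z r - W)"
    using \<sigma> unfolding W_def zw by (elim disjE; simp; presburger)+
  have Yjs1: "Y j (v + pr + pr1) = CR (v + \<i> * of_int W * of_real p0 + \<i> * of_int (-(\<sigma> * k - \<sigma> * n))) n k" for v
    by (subst sh(1), rule YJ, rule evenW(1))
  have Yjs2: "Y j (v + pr - pr1) = CR (v + \<i> * of_int W * of_real p0 + \<i> * of_int (-(\<sigma> * k + \<sigma> * n))) n k" for v
    by (subst sh(2), rule YJ, rule evenW(2))
  have Yjs3: "Y j (v - pr + pr1) = CR (v + \<i> * of_int W * of_real p0 + \<i> * of_int (-(- \<sigma> * k - \<sigma> * n))) n k" for v
    by (subst sh(3), rule YJ, rule evenW(3))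
  have Yjs4: "Y j (v - pr - pr1) = CR (v + \<i> * of_int W * of_real p0 + \<i> * of_int (-(- \<sigma> * k + \<sigma> * n))) n k" for v
    by (subst sh(4), rule YJ, rule evenW(4))
  have Yjs5: "Y (j + 1) (v + pr) = CR (v + \<i> * of_int W * of_real p0 + \<i> * of_int (-(\<sigma> * k))) (k + n) n" for v
    by (subst sh(5), rule YJ1, rule evenW(5))
  have Yjs6: "Y (j + 1) (v - pr) = CR (v + \<i> * of_int W * of_real p0 + \<i> * of_int (-(- \<sigma> * k))) (k + n) n" for v
    by (subst sh(6), rule YJ1, rule evenW(6))
  note Yjs = Yjs1 Yjs2 Yjs3 Yjs4 Yjs5 Yjs6
  show ?thesis
  proof (cases "\<nu> r = 1")
    case False
    then have nu2: "\<nu> r \<ge> 2" using nur by simp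
    have jq2: "M q \<le> j - 1" "j - 1 < M (Suc q)" using jq jt nu2 by auto
    have k2n: "2 * k \<le> n"
    proof -
      have "2 * k \<le> int (\<nu> r) * k" by (rule mult_right_mono) (use nu2 k0 in auto)
      then show ?thesis unfolding nrec using yy_nonneg[of \<nu> q] by simp
    qed
    have evenW2: "even (w0 - z r + - \<sigma> * z (Suc r) - W)" "even (w0 - z r + \<sigma> * z (Suc r) - W)"
      using \<sigma> unfolding W_def zw by (elim disjE; simp; presburger)+
    have YJm: "Y (j - 1) (v + \<i> * of_real (of_int sz * p0 - of_int sy)) = CR (v + \<i> * of_int W * of_real p0 + \<i> * of_int (-sy)) (n - k) k"
      if "even (w0 - z r + sz - W)" for v sz sy
    proof -
      have nj2: "y q + (j - 1 + 1 - M q) * y (Suc q) = n - k"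
      proof -
        have "j - 1 + 1 - M q = int (\<nu> r) - 1" using jt by simp
        then show ?thesis by (simp add: nrec k_def rq algebra_simps)
      qed
      have wj2: "z q + (j - 1 - M q) * z (Suc q) - 1 = w0 - z r" unfolding w0_def rq by (simp add: algebra_simps)
      have "Y (j - 1) (v + \<i> * of_real (of_int sz * p0 - of_int sy)) = CR (v + \<i> * of_real (of_int sz * p0 - of_int sy) + \<i> * of_int (w0 - z r) * of_real p0) (n - k) k"
        using Yblock[OF q jq2, of "v + \<i> * of_real (of_int sz * p0 - of_int sy)"] unfolding wj2 nj2 by (simp add: k_def rq)
      also have "\<dots> = CR (v + \<i> * of_int W * of_real p0 + \<i> * of_int (-sy)) (n - k) k"
        by (rule rebase') (rule that)
      finally show ?thesis .
    qed
    have Yms1: "Y (j - 1) (v + pr1) = CR (v + \<i> * of_int W * of_real p0 + \<i> * of_int (-(- \<sigma> * n))) (n - k) k" for v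
      by (subst sh(7), rule YJm, rule evenW2(1))
    have Yms2: "Y (j - 1) (v - pr1) = CR (v + \<i> * of_int W * of_real p0 + \<i> * of_int (-(\<sigma> * n))) (n - k) k" for v
      by (subst sh(8), rule YJm, rule evenW2(2))
    note Yms = Yms1 Yms2
    have o: "oY (j - 1) e v' = 1 + Y (j - 1) v'" for v'
    proof -
      have "0 \<le> M q" unfolding msum_def by (rule of_nat_0_le_iff)
      then have "j \<noteq> 0" using jt nu2 by simp
      then show ?thesis using False unfolding e by (simp add: onepY_def)
    qed
    have rr: "r \<in> {1..\<alpha>}" "Suc r \<in> {1..\<alpha>}" using r r\<alpha> by auto
    define x where "x v = v + \<i> * of_int W * of_real p0" for v
    have ev: "\<forall>\<^sub>\<approx>v. TI (-2*k) 0 (x v) \<noteq> 0 \<and> TI (-2*n) (-2*n+2*k) (x v) \<noteq> 0 \<and> TI (-2*n) 0 (x v) \<noteq> 0 \<and> TI (-2*n-2*k) (-2*k) (x v) \<noteq> 0 \<and> TI (-2*n-2*k) (-2*n) (x v) \<noteq> 0 \<and> TI (2*k) (2*n+2*k) (x v) \<noteq> 0 \<and> TI (2*n) (2*n+2*k) (x v) \<noteq> 0 \<and> TI (2*n-2*k) (2*n) (x v) \<noteq> 0 \<and> TI 0 (2*k) (x v) \<noteq> 0 \<and> TI 0 (2*n) (x v) \<noteq> 0"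
      unfolding x_def by (intro eventually_conj TI_ev3[OF rr rr(1)]) (auto simp: k_def n_def)
    then show ?thesis
    proof eventually_elim
      case (elim v)
      have I: "CR (x v + \<i> * of_int (n-k)) (n) (k) * CR (x v + \<i> * of_int (-n-k)) (n) (k) * CR (x v + \<i> * of_int (n+k)) (n) (k) * CR (x v + \<i> * of_int (-n+k)) (n) (k)
       = (1 + CR (x v + \<i> * of_int (n)) (n-k) (k)) * (1 + CR (x v + \<i> * of_int (-n)) (n-k) (k)) * (1 + CR (x v + \<i> * of_int (-k)) (n+k) (n)) * (1 + CR (x v + \<i> * of_int (k)) (n+k) (n)) * (1 + CR (x v + \<i> * of_int (-n-k)) (n) (k)) * (1 + CR (x v + \<i> * of_int (n+k)) (n) (k))"
        by (rule id_ii_nu2) (use k0 k2n elim in auto)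
      show ?case unfolding o Yjs Yms x_def[symmetric] using I \<sigma> by (auto simp: mult_ac add_ac neg_diff_comm)
    qed
  next
    case True
    show ?thesis
    proof (cases "q = 0")
      case True
      have "j = 0" using jdef Mr \<open>\<nu> r = 1\<close> True by (simp add: msum_def)
      then show ?thesis by (simp add: Yf_def onepY_def)
    next
      case False
      then obtain q' where q': "q = Suc q'" by (cases q) auto
      have nu1: "\<nu> r = 1" by fact
      have jM: "j = M q" using jdef Mr nu1 by simp
      have nuq: "\<nu> q \<ge> 1" using nu_pos q q' by auto
      have Mq: "M q = M q' + int (\<nu> q)" using q' msum_Suc by simp
      have jq2: "M q' \<le> j - 1" "j - 1 < M (Suc q')" using jM Mq nuq q' by auto
      define kp where "kp = y q"
      have kp0: "0 \<le> kp" unfolding kp_def by (rule yy_nonneg)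
      have kpk: "kp \<le> k" unfolding kp_def k_def rq using q by (intro y_mono) auto
      have nk: "n = k + kp" unfolding nrec nu1 kp_def by simp
      have kq: "k = y q' + int (\<nu> q) * kp" unfolding k_def kp_def rq q' by simp
      have zq: "z r = z q' + int (\<nu> q) * z q" unfolding rq q' by simp
      have zSr: "z (Suc r) = z q + z r" using zrec nu1 by simp
      have w0q: "w0 = z q - 1" unfolding w0_def jM by simp
      define w' where "w' = z q' + (j - 1 - M q') * z q - 1"
      have w'r: "z r = w' + z q + 1" unfolding w'_def zq jM Mq by (simp add: algebra_simps)
      have evenW2: "even (w' + - \<sigma> * z (Suc r) - W)" "even (w' + \<sigma> * z (Suc r) - W)"
        using \<sigma> unfolding W_def zSr w0q w'r by (elim disjE; simp; presburger)+
      have YJm: "Y (j - 1) (v + \<i> * of_real (of_int sz * p0 - of_int sy)) = CR (v + \<i> * of_int W * of_real p0 + \<i> * of_int (-sy)) k kp"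
        if "even (w' + sz - W)" for v sz sy
      proof -
        have nj2: "y q' + (j - 1 + 1 - M q') * y (Suc q') = k"
        proof -
          have a: "j - 1 + 1 - M q' = int (\<nu> q)" using jM Mq by simp
          have "y q' + (j - 1 + 1 - M q') * y (Suc q') = y q' + int (\<nu> q) * y q" unfolding a q' by (simp add: mult.commute)
          then show ?thesis using kq kp_def by simp
        qed
        have ql: "q' < \<alpha>" using q q' by simp
        have wq: "z q' + (j - 1 - M q') * z (Suc q') - 1 = w'" unfolding w'_def q' ..
        have "Y (j - 1) (v + \<i> * of_real (of_int sz * p0 - of_int sy)) = CR (v + \<i> * of_real (of_int sz * p0 - of_int sy) + \<i> * of_int w' * of_real p0) k kp"
          using Yblock[OF ql jq2, of "v + \<i> * of_real (of_int sz * p0 - of_int sy)"] unfolding wq nj2 by (simp add: kp_def q')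
        also have "\<dots> = CR (v + \<i> * of_int W * of_real p0 + \<i> * of_int (-sy)) k kp"
          by (rule rebase') (rule that)
        finally show ?thesis .
      qed
      have Yms1: "Y (j - 1) (v + pr1) = CR (v + \<i> * of_int W * of_real p0 + \<i> * of_int (-(- \<sigma> * n))) k kp" for v
        by (subst sh(7), rule YJm, rule evenW2(1))
      have Yms2: "Y (j - 1) (v - pr1) = CR (v + \<i> * of_int W * of_real p0 + \<i> * of_int (-(\<sigma> * n))) k kp" for v
        by (subst sh(8), rule YJm, rule evenW2(2))
      have o: "oY (j - 1) e v' = inverse (1 + Y (j - 1) v')" for v'
      proof -
        have "1 \<le> M q" using M_mono_strict[of 0 q] q False by (simp add: msum_def)
        then have "j - 1 \<noteq> -1" using jM by simp
        then show ?thesis using nu1 unfolding e by (simp add: onepY_def power_int_minus)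
      qed
      have rr: "r \<in> {1..\<alpha>}" "Suc r \<in> {1..\<alpha>}" "q \<in> {1..\<alpha>}" using r r\<alpha> q False by auto
      define x where "x v = v + \<i> * of_int W * of_real p0" for v
      have ev: "\<forall>\<^sub>\<approx>v. TI (-2*k) 0 (x v) \<noteq> 0 \<and> TI (-2*k-2*kp) (-2*k) (x v) \<noteq> 0 \<and> TI (-2*k-2*kp) (-2*kp) (x v) \<noteq> 0 \<and> TI (-2*k-2*kp) 0 (x v) \<noteq> 0 \<and> TI (-2*kp) 0 (x v) \<noteq> 0 \<and> TI (-4*k-2*kp) (-2*k) (x v) \<noteq> 0 \<and> TI (-4*k-2*kp) (-2*k-2*kp) (x v) \<noteq> 0 \<and> TI (2*k) (2*k+2*kp) (x v) \<noteq> 0 \<and> TI (2*k) (4*k+2*kp) (x v) \<noteq> 0 \<and> TI (2*k+2*kp) (4*k+2*kp) (x v) \<noteq> 0 \<and> TI (2*kp) (2*k+2*kp) (x v) \<noteq> 0 \<and> TI 0 (2*k) (x v) \<noteq> 0 \<and> TI 0 (2*k+2*kp) (x v) \<noteq> 0 \<and> TI 0 (2*kp) (x v) \<noteq> 0"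
        unfolding x_def by (intro eventually_conj TI_ev3[OF rr]) (auto simp: k_def kp_def nk[unfolded k_def kp_def n_def])
      then show ?thesis
      proof eventually_elim
        case (elim v)
        have I: "CR (x v + \<i> * of_int (kp)) (k+kp) (k) * CR (x v + \<i> * of_int (-2*k-kp)) (k+kp) (k) * CR (x v + \<i> * of_int (2*k+kp)) (k+kp) (k) * CR (x v + \<i> * of_int (-kp)) (k+kp) (k)
       = inverse (1 + CR (x v + \<i> * of_int (k+kp)) (k) (kp)) * inverse (1 + CR (x v + \<i> * of_int (-k-kp)) (k) (kp)) * (1 + CR (x v + \<i> * of_int (-k)) (2*k+kp) (k+kp)) * (1 + CR (x v + \<i> * of_int (k)) (2*k+kp) (k+kp)) * (1 + CR (x v + \<i> * of_int (-2*k-kp)) (k+kp) (k)) * (1 + CR (x v + \<i> * of_int (2*k+kp)) (k+kp) (k))"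
          by (rule id_ii_nu1) (use kp0 kpk elim in auto)
        have kn2: "k + (k + kp) = 2*k + kp" by simp
        from \<sigma> show ?case
        proof
          assume s1: "\<sigma> = 1"
          have c: "-(1*k - 1*(k+kp)) = kp" "-(1*k + 1*(k+kp)) = -2*k-kp" "-(- 1*k - 1*(k+kp)) = 2*k+kp" "-(- 1*k + 1*(k+kp)) = -kp"
            "-(- 1*(k+kp)) = k+kp" "-(1*(k+kp)) = -k-kp" by simp_all
          show ?case unfolding o Yjs Yms1 Yms2 x_def[symmetric] nk kn2 s1 c using I by (simp add: mult_ac)
        next
          assume s1: "\<sigma> = -1"
          have c: "-(- 1*k - - 1*(k+kp)) = -kp" "-(- 1*k + - 1*(k+kp)) = 2*k+kp" "-(- (- 1)*k - - 1*(k+kp)) = -2*k-kp" "-(- (- 1)*k + - 1*(k+kp)) = kp"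
            "-(- (- 1)*(k+kp)) = -k-kp" "-(- 1*(k+kp)) = k+kp" by simp_all
          show ?case unfolding o Yjs Yms1 Yms2 x_def[symmetric] nk kn2 s1 c using I by (simp add: mult_ac)
        qed
      qed
    qed
  qed
qed


abbreviation "K \<equiv> Kf \<nu> \<alpha> p0 N m u \<omega>"

definition Kx where "Kx x = (-1)^(m * nat (z (Suc \<alpha>))) * T (nat (y (Suc \<alpha>) - y \<alpha>)) x / T (nat (y \<alpha>)) (x + \<i> * of_int (y (Suc \<alpha>)))"

lemma Kx_per: "Kx (x + of_int t * P2) = Kx x"
proof -
  have a: "x + of_int t * P2 + \<i> * of_int (y (Suc \<alpha>)) = (x + \<i> * of_int (y (Suc \<alpha>))) + of_int t * P2" by (simp add: algebra_simps)
  show ?thesis unfolding Kx_def a T_shift_int ..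
qed

lemma rebase_eq:
  assumes "w + sz = W + 2*t"
  shows "v + \<i> * of_real (of_int sz * p0 - of_int sy) + \<i> * of_int w * of_real p0
       = (v + \<i> * of_int W * of_real p0 + \<i> * of_int (-sy)) + of_int t * P2"
proof -
  have e: "complex_of_int w + of_int sz = of_int W + 2 * of_int t"
  proof -
    have "complex_of_int (w + sz) = complex_of_int (W + 2*t)" using assms by simp
    then show ?thesis by simp
  qed
  have "v + \<i> * of_real (of_int sz * p0 - of_int sy) + \<i> * of_int w * of_real p0
      = v + \<i> * of_real p0 * (of_int w + of_int sz) - \<i> * of_int sy"
    by (simp add: algebra_simps)
  also have "\<dots> = v + \<i> * of_real p0 * (of_int W + 2 * of_int t) - \<i> * of_int sy"
    unfolding e ..
  also have "\<dots> = (v + \<i> * of_int W * of_real p0 + \<i> * of_int (-sy)) + of_int t * P2"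
    by (simp add: algebra_simps)
  finally show ?thesis .
qed

lemma alpha_block:
  obtains q where "\<alpha> = Suc q" "q < \<alpha>" "M q \<le> M \<alpha> - 2" "M \<alpha> - 1 < M (Suc q)" "M \<alpha> = M q + int (\<nu> \<alpha>)"
proof -
  obtain q where q: "\<alpha> = Suc q" using alpha by (cases \<alpha>) auto
  have "M \<alpha> = M q + int (\<nu> \<alpha>)" using q msum_Suc by simp
  then show ?thesis using that q nu_last by auto
qed

lemma Kf_eq: "K v = Kx (v + \<i> * of_int (z (\<alpha> - 1) + (int (\<nu> \<alpha>) - 1) * z \<alpha> - 1) * of_real p0)"
proof -
  obtain q where q: "\<alpha> = Suc q" "q < \<alpha>" "M q \<le> M \<alpha> - 2" "M \<alpha> - 1 < M (Suc q)" "M \<alpha> = M q + int (\<nu> \<alpha>)"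
    by (rule alpha_block)
  have b1: "M q \<le> M \<alpha> - 1" "M \<alpha> - 1 < M (Suc q)" using q by auto
  have b2: "M q < M \<alpha> - 1" "M \<alpha> - 1 \<le> M (Suc q)" using q nu_last by auto
  have w: "wcf \<nu> \<alpha> (M \<alpha> - 1) = z (\<alpha> - 1) + (int (\<nu> \<alpha>) - 1) * z \<alpha> - 1"
    unfolding wcf_eq[OF q(2) b1] using q by simp
  have nt: "ntil \<nu> \<alpha> (M \<alpha> - 1) = y (Suc \<alpha>) - y \<alpha>"
    unfolding ntil_eq[OF q(2) b2] using q by (simp add: algebra_simps)
  have yc: "ycf \<nu> (int \<alpha> - 1) = y \<alpha>" "ycf \<nu> (int \<alpha>) = y (Suc \<alpha>)" "zcf \<nu> (int \<alpha>) = z (Suc \<alpha>)"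
    using ycf_nat[of \<alpha>] zcf_nat[of \<alpha>] by auto
  define s where "s = \<i> * of_int (z (\<alpha> - 1) + (int (\<nu> \<alpha>) - 1) * z \<alpha> - 1) * complex_of_real p0"
  have a: "v + \<i> * of_int (y (Suc \<alpha>)) + s = (v + s) + \<i> * of_int (y (Suc \<alpha>))" by (simp add: add_ac)
  show ?thesis unfolding Kf_def Let_def w nt yc s_def[symmetric] Kx_def a by simp
qed

lemma part_iii: "\<forall>\<^sub>\<approx>v. 1 + Y (M \<alpha> - 1) v = (1 + K v)^2"
proof -
  obtain q where q: "\<alpha> = Suc q" "q < \<alpha>" "M q \<le> M \<alpha> - 2" "M \<alpha> - 1 < M (Suc q)" "M \<alpha> = M q + int (\<nu> \<alpha>)"
    by (rule alpha_block)
  have b1: "M q \<le> M \<alpha> - 1" "M \<alpha> - 1 < M (Suc q)" using q by auto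
  define W where "W = z (\<alpha> - 1) + (int (\<nu> \<alpha>) - 1) * z \<alpha> - 1"
  define a where "a = y (Suc \<alpha>)"
  define y' where "y' = y \<alpha>"
  define b where "b = nat (z (Suc \<alpha>))"
  have ab: "p0 * real b = real_of_int a" unfolding a_def b_def using p0_ab zz_nonneg[of \<nu> "Suc \<alpha>"] by simp
  have y0: "0 \<le> y'" unfolding y'_def by (rule yy_nonneg)
  have ya: "y' \<le> a" unfolding y'_def a_def by (rule y_mono) simp
  have Yeq: "Y (M \<alpha> - 1) v = CR (v + \<i> * of_int W * of_real p0 + \<i> * of_int 0) a y'" for v
  proof -
    have n: "y q + (M \<alpha> - 1 + 1 - M q) * y (Suc q) = a" unfolding a_def using q by (simp add: mult.commute)
    have w: "z q + (M \<alpha> - 1 - M q) * z (Suc q) - 1 = W" unfolding W_def using q by simp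
    show ?thesis using Yblock[OF q(2) b1, of v] unfolding n w using q by (simp add: y'_def)
  qed
  have Keq: "K v = (-1)^(m*b) * T (nat (a - y')) (v + \<i> * of_int W * of_real p0) / T (nat y') (v + \<i> * of_int W * of_real p0 + \<i> * of_int a)" for v
    unfolding Kf_eq Kx_def W_def[symmetric] a_def y'_def b_def ..
  have ev: "\<forall>\<^sub>\<approx>v. TI (a-y') (a+y') (v + \<i> * of_int W * of_real p0) \<noteq> 0"
    by (rule TI_ev[of \<alpha>]) (use alpha in \<open>auto simp: y'_def\<close>)
  then show ?thesis
  proof eventually_elim
    case (elim v)
    show ?case unfolding Yeq Keq by (rule id_iii[OF ab y0 ya elim])
  qed
qed

lemma part_iv: "\<forall>\<^sub>\<approx>v. K (v + \<i> * of_real (pseq \<nu> p0 \<alpha>)) * K (v - \<i> * of_real (pseq \<nu> p0 \<alpha>)) = 1 + Y (M \<alpha> - 2) v"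
proof -
  obtain q where q: "\<alpha> = Suc q" "q < \<alpha>" "M q \<le> M \<alpha> - 2" "M \<alpha> - 1 < M (Suc q)" "M \<alpha> = M q + int (\<nu> \<alpha>)"
    by (rule alpha_block)
  have b1: "M q \<le> M \<alpha> - 2" "M \<alpha> - 2 < M (Suc q)" using q by auto
  define Wk where "Wk = z (\<alpha> - 1) + (int (\<nu> \<alpha>) - 1) * z \<alpha> - 1"
  define W where "W = Wk - z \<alpha>"
  define a where "a = y (Suc \<alpha>)"
  define y' where "y' = y \<alpha>"
  define b where "b = nat (z (Suc \<alpha>))"
  define \<sigma> where "\<sigma> = (-1::int)^\<alpha>"
  have \<sigma>: "\<sigma> = 1 \<or> \<sigma> = -1" unfolding \<sigma>_def by (rule sigma_cases)
  have ab: "p0 * real b = real_of_int a" unfolding a_def b_def using p0_ab zz_nonneg[of \<nu> "Suc \<alpha>"] by simp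
  have y0: "0 \<le> y'" unfolding y'_def by (rule yy_nonneg)
  have y2a: "2 * y' \<le> a" unfolding y'_def a_def using two_y_less[of \<alpha>] alpha by simp
  have Yeq: "Y (M \<alpha> - 2) v = CR (v + \<i> * of_int W * of_real p0 + \<i> * of_int 0) (a - y') y'" for v
  proof -
    have rec: "y (Suc \<alpha>) = y q + int (\<nu> \<alpha>) * y \<alpha>" using q by simp
    have n: "y q + (M \<alpha> - 2 + 1 - M q) * y (Suc q) = a - y'" unfolding a_def y'_def rec using q by (simp add: algebra_simps)
    have w: "z q + (M \<alpha> - 2 - M q) * z (Suc q) - 1 = W" unfolding W_def Wk_def using q by (simp add: algebra_simps)
    show ?thesis using Yblock[OF q(2) b1, of v] unfolding n w using q by (simp add: y'_def)
  qed
  have Kp: "K (v + \<i> * of_real (of_int sz * p0 - of_int sy)) = Kx (v + \<i> * of_int W * of_real p0 + \<i> * of_int (-sy))"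
    if "even (Wk + sz - W)" for v sz sy
  proof -
    have "K (v + \<i> * of_real (of_int sz * p0 - of_int sy)) = Kx (v + \<i> * of_real (of_int sz * p0 - of_int sy) + \<i> * of_int Wk * of_real p0)"
      unfolding Kf_eq Wk_def ..
    also have "\<dots> = Kx ((v + \<i> * of_int W * of_real p0 + \<i> * of_int (-sy)) + of_int ((Wk + sz - W) div 2) * P2)"
      by (subst rebase_eq[where t="(Wk + sz - W) div 2" and W=W]) (use that in auto)
    finally show ?thesis unfolding Kx_per .
  qed
  have ps: "pseq \<nu> p0 \<alpha> = of_int (\<sigma> * z \<alpha>) * p0 - of_int (\<sigma> * y')" unfolding pseq_int \<sigma>_def y'_def ..
  have sh: "v + \<i> * of_real (pseq \<nu> p0 \<alpha>) = v + \<i> * of_real (of_int (\<sigma> * z \<alpha>) * p0 - of_int (\<sigma> * y'))"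
           "v - \<i> * of_real (pseq \<nu> p0 \<alpha>) = v + \<i> * of_real (of_int (- \<sigma> * z \<alpha>) * p0 - of_int (- \<sigma> * y'))" for v
    unfolding ps by (simp_all add: algebra_simps)
  have ev1: "even (Wk + \<sigma> * z \<alpha> - W)" "even (Wk + - \<sigma> * z \<alpha> - W)"
    using \<sigma> unfolding W_def by (elim disjE; simp; presburger)+
  have K1: "K (v + \<i> * of_real (pseq \<nu> p0 \<alpha>)) = Kx (v + \<i> * of_int W * of_real p0 + \<i> * of_int (-(\<sigma> * y')))" for v
    by (subst sh(1), rule Kp, rule ev1(1))
  have K2: "K (v - \<i> * of_real (pseq \<nu> p0 \<alpha>)) = Kx (v + \<i> * of_int W * of_real p0 + \<i> * of_int (-(- \<sigma> * y')))" for v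
    by (subst sh(2), rule Kp, rule ev1(2))
  have ev: "\<forall>\<^sub>\<approx>v. TI a (a+2*y') (v + \<i> * of_int W * of_real p0) \<noteq> 0 \<and> TI (a-2*y') a (v + \<i> * of_int W * of_real p0) \<noteq> 0"
    by (intro eventually_conj TI_ev[of \<alpha>]) (use alpha in \<open>auto simp: y'_def\<close>)
  then show ?thesis
  proof eventually_elim
    case (elim v)
    define x where "x = v + \<i> * of_int W * of_real p0"
    have I: "((-1)^(m*b) * T (nat (a - y')) (x + \<i> * of_int y') / T (nat y') (x + \<i> * of_int y' + \<i> * of_int a))
       * ((-1)^(m*b) * T (nat (a - y')) (x + \<i> * of_int (-y')) / T (nat y') (x + \<i> * of_int (-y') + \<i> * of_int a))
       = 1 + CR (x + \<i> * of_int 0) (a - y') y'"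
      by (rule id_iv[OF ab y0 y2a]) (use elim in \<open>auto simp: x_def\<close>)
    have KX: "Kx x' = (-1)^(m*b) * T (nat (a - y')) x' / T (nat y') (x' + \<i> * of_int a)" for x'
      unfolding Kx_def a_def y'_def b_def ..
    from \<sigma> show ?case
    proof
      assume s: "\<sigma> = 1"
      show ?case unfolding K1 K2 Yeq x_def[symmetric] KX s using I by (simp add: mult.commute)
    next
      assume s: "\<sigma> = -1"
      show ?case unfolding K1 K2 Yeq x_def[symmetric] KX s using I by simp
    qed
  qed
qed

end

theorem theorem1:
  fixes \<nu> :: "nat \<Rightarrow> nat" and \<alpha> :: nat and p0 :: real
    and N m :: nat and u :: complex and \<omega> :: "nat \<Rightarrow> complex"
  assumes p0_rat: "p0 \<in> \<rat>" and p0_gt: "p0 > 2"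
    and alpha: "\<alpha> \<ge> 1"
    and nu_pos: "\<forall>j\<in>{1..\<alpha>}. \<nu> j \<ge> 1"
    and nu_last: "\<nu> \<alpha> \<ge> 2"
    and cf: "p0 = cfval \<nu> \<alpha>"
    and N: "even N" "N > 0"
    and m: "m \<le> N div 2"
    and bethe: "\<forall>j\<in>{1..m}.
        sinh (complex_of_real (pi / p0 / 2) * (\<omega> j - \<i> * (u + 2))) \<noteq> 0
      \<and> sinh (complex_of_real (pi / p0 / 2) * (\<omega> j + \<i> * u)) \<noteq> 0
      \<and> Qf (pi / p0) m \<omega> (\<omega> j - 2 * \<i>) \<noteq> 0
      \<and> - (((sinh (complex_of_real (pi / p0 / 2) * (\<omega> j + \<i> * (u + 2)))
             * sinh (complex_of_real (pi / p0 / 2) * (\<omega> j - \<i> * u)))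
          / (sinh (complex_of_real (pi / p0 / 2) * (\<omega> j - \<i> * (u + 2)))
             * sinh (complex_of_real (pi / p0 / 2) * (\<omega> j + \<i> * u)))) ^ (N div 2))
        = Qf (pi / p0) m \<omega> (\<omega> j + 2 * \<i>) / Qf (pi / p0) m \<omega> (\<omega> j - 2 * \<i>)"
  shows
   "(\<forall>r\<in>{1..\<alpha>}. \<forall>j::int. msum \<nu> (r - 1) \<le> j \<and> j \<le> msum \<nu> r - 2 \<longrightarrow>
       (\<forall>\<^sub>\<approx>v.
          Yf \<nu> \<alpha> p0 N m u \<omega> j (v + \<i> * of_real (pseq \<nu> p0 r))
        * Yf \<nu> \<alpha> p0 N m u \<omega> j (v - \<i> * of_real (pseq \<nu> p0 r))
        = onepY \<nu> \<alpha> p0 N m u \<omega> (j - 1) (if j = msum \<nu> (r - 1) then -1 else 1) v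
        * (1 + Yf \<nu> \<alpha> p0 N m u \<omega> (j + 1) v)))
  \<and> (\<forall>r\<in>{1..\<alpha> - 1}. let j = msum \<nu> r - 1; pr = \<i> * of_real (pseq \<nu> p0 r);
          pr1 = \<i> * of_real (pseq \<nu> p0 (Suc r)); e = (if \<nu> r = 1 then -1 else 1 :: int);
          Y = Yf \<nu> \<alpha> p0 N m u \<omega> in
       (\<forall>\<^sub>\<approx>v.
          Y j (v + pr + pr1) * Y j (v + pr - pr1) * Y j (v - pr + pr1) * Y j (v - pr - pr1)
        = (onepY \<nu> \<alpha> p0 N m u \<omega> (j - 1) e (v + pr1)
           * onepY \<nu> \<alpha> p0 N m u \<omega> (j - 1) e (v - pr1))
        * (1 + Y (j + 1) (v + pr)) * (1 + Y (j + 1) (v - pr))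
        * (1 + Y j (v + pr - pr1)) * (1 + Y j (v - pr + pr1))))
  \<and> (\<forall>\<^sub>\<approx>v. 1 + Yf \<nu> \<alpha> p0 N m u \<omega> (msum \<nu> \<alpha> - 1) v
            = (1 + Kf \<nu> \<alpha> p0 N m u \<omega> v) ^ 2)
  \<and> (\<forall>\<^sub>\<approx>v. Kf \<nu> \<alpha> p0 N m u \<omega> (v + \<i> * of_real (pseq \<nu> p0 \<alpha>))
            * Kf \<nu> \<alpha> p0 N m u \<omega> (v - \<i> * of_real (pseq \<nu> p0 \<alpha>))
            = 1 + Yf \<nu> \<alpha> p0 N m u \<omega> (msum \<nu> \<alpha> - 2) v)"
  proof -
  have sinth: "sin (pi / p0) \<noteq> 0"
  proof -
    have "0 < pi / p0" "pi / p0 < pi" using p0_gt by (auto simp: field_simps)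
    then show ?thesis using sin_gt_zero by force
  qed
  interpret main p0 N m u \<omega> \<nu> \<alpha>
    by unfold_locales (use p0_gt N sinth bethe alpha nu_pos nu_last cf in auto)
  show ?thesis
  proof (intro conjI)
    show "\<forall>r\<in>{1..\<alpha>}. \<forall>j::int. msum \<nu> (r - 1) \<le> j \<and> j \<le> msum \<nu> r - 2 \<longrightarrow>
       (\<forall>\<^sub>\<approx>v.
          Yf \<nu> \<alpha> p0 N m u \<omega> j (v + \<i> * of_real (pseq \<nu> p0 r))
        * Yf \<nu> \<alpha> p0 N m u \<omega> j (v - \<i> * of_real (pseq \<nu> p0 r))
        = onepY \<nu> \<alpha> p0 N m u \<omega> (j - 1) (if j = msum \<nu> (r - 1) then -1 else 1) v
        * (1 + Yf \<nu> \<alpha> p0 N m u \<omega> (j + 1) v))"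
      using part_i by blast
  next
    show "\<forall>r\<in>{1..\<alpha> - 1}. let j = msum \<nu> r - 1; pr = \<i> * of_real (pseq \<nu> p0 r);
          pr1 = \<i> * of_real (pseq \<nu> p0 (Suc r)); e = (if \<nu> r = 1 then -1 else 1 :: int);
          Y = Yf \<nu> \<alpha> p0 N m u \<omega> in
       (\<forall>\<^sub>\<approx>v.
          Y j (v + pr + pr1) * Y j (v + pr - pr1) * Y j (v - pr + pr1) * Y j (v - pr - pr1)
        = (onepY \<nu> \<alpha> p0 N m u \<omega> (j - 1) e (v + pr1)
           * onepY \<nu> \<alpha> p0 N m u \<omega> (j - 1) e (v - pr1))
        * (1 + Y (j + 1) (v + pr)) * (1 + Y (j + 1) (v - pr))
        * (1 + Y j (v + pr - pr1)) * (1 + Y j (v - pr + pr1)))"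
      unfolding Let_def by (intro ballI part_ii_aux) auto
  next
    show "\<forall>\<^sub>\<approx>v. 1 + Yf \<nu> \<alpha> p0 N m u \<omega> (msum \<nu> \<alpha> - 1) v
            = (1 + Kf \<nu> \<alpha> p0 N m u \<omega> v) ^ 2"
      by (rule part_iii)
  next
    show "\<forall>\<^sub>\<approx>v. Kf \<nu> \<alpha> p0 N m u \<omega> (v + \<i> * of_real (pseq \<nu> p0 \<alpha>))
            * Kf \<nu> \<alpha> p0 N m u \<omega> (v - \<i> * of_real (pseq \<nu> p0 \<alpha>))
            = 1 + Yf \<nu> \<alpha> p0 N m u \<omega> (msum \<nu> \<alpha> - 2) v"
      by (rule part_iv)
  qed
qed

end
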